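(* Let $q$ be a prime power, $m\ge1$, $1\le k\le n$, $g_1,\dots,g_n\in\mathbb{F}_{q^m}$ linearly independent over $\mathbb{F}_q$, $\mathbf g=(g_1,\dots,g_n)$, $\mathbf r\in\mathbb{F}_{q^m}^n$. Let $B=\{b^{(1)},b^{(2)}\}$ be a minimal basis of the interpolation module $\mathfrak M(\mathbf r)$ with respect to the $(0,k-1)$-weighted term-over-position order, with $\mathrm{lpos}(b^{(i)})=i$ for $i=1,2$, and let $\ell_i$ be the $(0,k-1)$-weighted $q$-degree of $b^{(i)}$. Then $\ell_1+\ell_2=n+k-1$, or equivalently $\mathrm{qdeg}(b^{(1)}_1)+\mathrm{qdeg}(b^{(2)}_2)=n$, where $b^{(i)}=[b^{(i)}_1\ \ b^{(i)}_2]$.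
   Context: Write $[i]:=q^i$. A $q$-linearized polynomial is $f(x)=\sum_{i=0}^{d}a_ix^{[i]}$, $a_i\in\mathbb{F}_{q^m}$; if $a_d\ne0$, $d=\mathrm{qdeg}(f)$ ($\mathrm{qdeg}(0)=-\infty$). $\mathcal{L}_q(x,q^m)$ is the ring of these under addition and composition $\circ$. $\Pi_{\mathbf g}(x)=\prod_{u\in\langle g_1,\dots,g_n\rangle}(x-u)$ ($\mathbb{F}_q$-span), in $\mathcal{L}_q(x,q^m)$ of $q$-degree $n$. For $\mathbf r=(r_1,\dots,r_n)$, $\Lambda_{\mathbf g,\mathbf r}(x)=\sum_{i=1}^n(-1)^{n-i}r_i\det(\mathfrak D_i(\mathbf g,x))/\det(M_n(g_1,\dots,g_n))$ ($M_n(v_1,\dots,v_s)$ the $n\times s$ matrix with $(j,l)$ entry $v_l^{[j-1]}$, $\mathfrak D_i(\mathbf g,x)$ is $M_n(g_1,\dots,g_n,x)$ without column $i$), in $\mathcal{L}_q(x,q^m)$ with $\Lambda_{\mathbf g,\mathbf r}(g_i)=r_i$. $\mathfrak M(\mathbf r)$ is the set of all $\beta\circ[\Pi_{\mathbf g}\ \ 0]+\gamma\circ[-\Lambda_{\mathbf g,\mathbf r}\ \ x]$, $\beta,\gamma\in\mathcal{L}_q(x,q^m)$, where $h\circ[f_1\ f_2]=[h\circ f_1\ \ h\circ f_2]$. Monomials are $x^{[i]}e_j$, $j\in\{1,2\}$. $(0,k-1)$-weighted term-over-position order: with $w_1=0,w_2=k-1$, $x^{[i_1]}e_{j_1}<x^{[i_2]}e_{j_2}$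 iff $i_1+w_{j_1}<i_2+w_{j_2}$ or (equality and $j_1<j_2$). $\mathrm{lm},\mathrm{lt},\mathrm{lpos}$ of nonzero $f$: greatest monomial, that term with coefficient, its coordinate. The $(0,k-1)$-weighted $q$-degree of $[f_1\ f_2]$ is $\max\{\mathrm{qdeg}(f_1),\mathrm{qdeg}(f_2)+k-1\}$. A basis is a generating set with $\sum a_i\circ f^{(i)}=0\Rightarrow$ all $a_i=0$. $f$ reduces modulo a set $F$ of nonzero elements in one step if $h=f-\sum_i(b_ix^{[a_i]})\circ f^{(i)}$ for some $f^{(i)}\in F$, $b_i\in\mathbb{F}_{q^m}$, $a_i\ge0$ with $\mathrm{lm}(f)=x^{[a_i]}\circ\mathrm{lm}(f^{(i)})$ and $\mathrm{lt}(f)=\sum_i(b_ix^{[a_i]})\circ\mathrm{lt}(f^{(i)})$; $f$ is minimal w.r.t. $F$ if it cannot be so reduced; a basis $B$ is minimal if each $b\in B$ is minimal w.r.t. $B\setminus\{b\}$. *)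

theory Defs
  imports "HOL-Computational_Algebra.Polynomial" "HOL-Library.Product_Plus"
          "Jordan_Normal_Form.Determinant"
begin

definition is_prime_power :: "nat \<Rightarrow> bool" where
  "is_prime_power q \<longleftrightarrow> (\<exists>p e. prime p \<and> e \<ge> 1 \<and> q = p ^ e)"

text \<open>The subfield F_q of F_{q^m} (the type 'a, with CARD('a) = q^m).\<close>
definition Fq :: "nat \<Rightarrow> 'a::field set" where
  "Fq q = {x. x ^ q = x}"

definition lin_indep_Fq :: "nat \<Rightarrow> nat \<Rightarrow> (nat \<Rightarrow> 'a::field) \<Rightarrow> bool" where
  "lin_indep_Fq q n g \<longleftrightarrow>
     (\<forall>c. (\<forall>i\<in>{1..n}. c i \<in> Fq q) \<and> (\<Sum>i=1..n. c i * g i) = 0 \<longrightarrow> (\<forall>i\<in>{1..n}. c i = 0))"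

definition Fq_span :: "nat \<Rightarrow> nat \<Rightarrow> (nat \<Rightarrow> 'a::field) \<Rightarrow> 'a set" where
  "Fq_span q n g = {(\<Sum>i=1..n. c i * g i) | c. \<forall>i\<in>{1..n}. c i \<in> Fq q}"

definition Lq :: "nat \<Rightarrow> 'a::field poly set" where
  "Lq q = {f. \<forall>i. coeff f i \<noteq> 0 \<longrightarrow> (\<exists>j. i = q ^ j)}"

definition qcoeff :: "nat \<Rightarrow> 'a::field poly \<Rightarrow> nat \<Rightarrow> 'a" where
  "qcoeff q f i = coeff f (q ^ i)"

text \<open>q-degree; only used on nonzero polynomials (qdeg 0 = -infinity in the paper).\<close>
definition qdeg :: "nat \<Rightarrow> 'a::field poly \<Rightarrow> nat" where
  "qdeg q f = Max {i. qcoeff q f i \<noteq> 0}"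

text \<open>Composition of linearized polynomials is polynomial composition: h o f = pcompose h f.\<close>

definition Pi_g :: "nat \<Rightarrow> nat \<Rightarrow> (nat \<Rightarrow> 'a::field) \<Rightarrow> 'a poly" where
  "Pi_g q n g = (\<Prod>u\<in>Fq_span q n g. [:- u, 1:])"

definition Mn_g :: "nat \<Rightarrow> nat \<Rightarrow> (nat \<Rightarrow> 'a::field) \<Rightarrow> 'a mat" where
  "Mn_g q n g = mat n n (\<lambda>(j, l). g (l + 1) ^ (q ^ j))"

text \<open>D_i(g,x): M_n(g_1,...,g_n,x) with column i (1-based) removed; entries in 'a poly.\<close>
definition D_g :: "nat \<Rightarrow> nat \<Rightarrow> (nat \<Rightarrow> 'a::field) \<Rightarrow> nat \<Rightarrow> 'a poly mat" where
  "D_g q n g i = mat n n (\<lambda>(j, l).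
      let l' = (if l + 1 < i then l + 1 else l + 2)
      in if l' = n + 1 then monom 1 (q ^ j) else [: g l' ^ (q ^ j) :])"

definition Lambda_g :: "nat \<Rightarrow> nat \<Rightarrow> (nat \<Rightarrow> 'a::field) \<Rightarrow> (nat \<Rightarrow> 'a) \<Rightarrow> 'a poly" where
  "Lambda_g q n g r =
     (\<Sum>i=1..n. smult ((-1) ^ (n - i) * r i / det (Mn_g q n g)) (det (D_g q n g i)))"

type_synonym 'a lvec = "'a poly \<times> 'a poly"

definition vcomp :: "'a::field poly \<Rightarrow> 'a lvec \<Rightarrow> 'a lvec" where
  "vcomp h f = (pcompose h (fst f), pcompose h (snd f))"

definition Mmod :: "nat \<Rightarrow> nat \<Rightarrow> (nat \<Rightarrow> 'a::field) \<Rightarrow> (nat \<Rightarrow> 'a) \<Rightarrow> 'a lvec set" where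
  "Mmod q n g r = {vcomp \<beta> (Pi_g q n g, 0) + vcomp \<gamma> (- Lambda_g q n g r, monom 1 1)
                    | \<beta> \<gamma>. \<beta> \<in> Lq q \<and> \<gamma> \<in> Lq q}"

text \<open>monomial x^[i] e_j is represented by the pair (i,j), j in {1,2}\<close>
definition vcomp_j :: "nat \<Rightarrow> 'a lvec \<Rightarrow> 'a poly" where
  "vcomp_j j v = (if j = 1 then fst v else snd v)"

definition wt :: "nat \<Rightarrow> nat \<Rightarrow> nat" where
  "wt k j = (if j = 1 then 0 else k - 1)"

definition mono_less :: "nat \<Rightarrow> nat \<times> nat \<Rightarrow> nat \<times> nat \<Rightarrow> bool" where
  "mono_less k m1 m2 \<longleftrightarrow>
     fst m1 + wt k (snd m1) < fst m2 + wt k (snd m2) \<or>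
     (fst m1 + wt k (snd m1) = fst m2 + wt k (snd m2) \<and> snd m1 < snd m2)"

definition vsupp :: "nat \<Rightarrow> 'a::field lvec \<Rightarrow> (nat \<times> nat) set" where
  "vsupp q v = {(i, j). j \<in> {1, 2} \<and> qcoeff q (vcomp_j j v) i \<noteq> 0}"

definition lm :: "nat \<Rightarrow> nat \<Rightarrow> 'a::field lvec \<Rightarrow> nat \<times> nat" where
  "lm q k v = (THE m. m \<in> vsupp q v \<and> (\<forall>m'\<in>vsupp q v. m' \<noteq> m \<longrightarrow> mono_less k m' m))"

definition lpos :: "nat \<Rightarrow> nat \<Rightarrow> 'a::field lvec \<Rightarrow> nat" where
  "lpos q k v = snd (lm q k v)"

definition mterm :: "nat \<Rightarrow> 'a::field \<Rightarrow> nat \<times> nat \<Rightarrow> 'a lvec" where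
  "mterm q c m = (if snd m = 1 then (monom c (q ^ fst m), 0) else (0, monom c (q ^ fst m)))"

definition lterm :: "nat \<Rightarrow> nat \<Rightarrow> 'a::field lvec \<Rightarrow> 'a lvec" where
  "lterm q k v = mterm q (qcoeff q (vcomp_j (snd (lm q k v)) v) (fst (lm q k v))) (lm q k v)"

text \<open>(0,k-1)-weighted q-degree max{qdeg f1, qdeg f2 + k - 1}, with qdeg 0 = -infinity;
  for nonzero vectors.\<close>
definition wqdeg :: "nat \<Rightarrow> nat \<Rightarrow> 'a::field lvec \<Rightarrow> nat" where
  "wqdeg q k v =
     (if fst v = 0 then qdeg q (snd v) + (k - 1)
      else if snd v = 0 then qdeg q (fst v)
      else max (qdeg q (fst v)) (qdeg q (snd v) + (k - 1)))"

definition is_basis :: "nat \<Rightarrow> 'a::field lvec set \<Rightarrow> 'a lvec set \<Rightarrow> bool" where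
  "is_basis q M B \<longleftrightarrow> finite B \<and> B \<subseteq> M \<and>
     (\<forall>f\<in>M. \<exists>a. (\<forall>b\<in>B. a b \<in> Lq q) \<and> f = (\<Sum>b\<in>B. vcomp (a b) b)) \<and>
     (\<forall>a. (\<forall>b\<in>B. a b \<in> Lq q) \<and> (\<Sum>b\<in>B. vcomp (a b) b) = 0 \<longrightarrow> (\<forall>b\<in>B. a b = 0))"

text \<open>f reduces modulo F in one step (the reduct h = f - sum ... always exists once the
  b_i, a_i, f^(i) exist).\<close>
definition reduces :: "nat \<Rightarrow> nat \<Rightarrow> 'a::field lvec set \<Rightarrow> 'a lvec \<Rightarrow> bool" where
  "reduces q k F f \<longleftrightarrow> f \<noteq> 0 \<and>
     (\<exists>(s::nat) bs es fs. (\<forall>i<s. fs i \<in> F \<and>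
          lm q k f = (es i + fst (lm q k (fs i)), snd (lm q k (fs i)))) \<and>
        lterm q k f = (\<Sum>i<s. vcomp (monom (bs i) (q ^ es i)) (lterm q k (fs i))))"

definition minimal_wrt :: "nat \<Rightarrow> nat \<Rightarrow> 'a::field lvec set \<Rightarrow> 'a lvec \<Rightarrow> bool" where
  "minimal_wrt q k F f \<longleftrightarrow> \<not> reduces q k F f"

definition minimal_basis :: "nat \<Rightarrow> nat \<Rightarrow> 'a::field lvec set \<Rightarrow> 'a lvec set \<Rightarrow> bool" where
  "minimal_basis q k M B \<longleftrightarrow> is_basis q M B \<and> (\<forall>b\<in>B. minimal_wrt q k (B - {b}) b)"

end

theory Submission imports Defs "HOL-Number_Theory.Residues" begin

hide_const (open) UnivPoly.monom UnivPoly.coeff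

lemma pcompose_monom: "pcompose (monom c n) f = smult c (f ^ n)"
proof (induction n)
  case 0 then show ?case by (simp add: monom_0)
next
  case (Suc n)
  then show ?case by (simp add: monom_Suc pcompose_pCons mult.commute)
qed

locale fqs =
  fixes q :: nat and e :: nat and ty :: "'a::{field,finite} itself"
  assumes pr: "prime CHAR('a)" and qe: "q = CHAR('a) ^ e" and e1: "e \<ge> 1"
begin

lemma q2: "q \<ge> 2"
proof -
  have "CHAR('a) \<ge> 2" using pr prime_ge_2_nat by blast
  moreover have "CHAR('a) ^ 1 \<le> CHAR('a) ^ e"
    by (rule power_increasing) (use e1 prime_gt_0_nat[OF pr] in auto)
  ultimately show ?thesis using qe by simp
qed

lemma frob_poly: "((f::'a poly) + g) ^ (q ^ t) = f ^ (q ^ t) + g ^ (q ^ t)"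
  by (rule freshmans_dream'[where n = "e * t"]) (simp_all add: pr qe power_mult)

lemma frob_poly_sum: "(sum (f :: 'b \<Rightarrow> 'a poly) A) ^ (q ^ t) = (\<Sum>i\<in>A. f i ^ (q ^ t))"
  by (rule freshmans_dream_sum'[where n = "e * t"]) (simp_all add: pr qe power_mult)

lemma frob: "((x::'a) + y) ^ (q ^ t) = x ^ (q ^ t) + y ^ (q ^ t)"
  by (rule freshmans_dream'[where n = "e * t"]) (simp_all add: pr qe power_mult)

lemma frob_neg: "(- (x::'a)) ^ (q ^ t) = - (x ^ (q ^ t))"
proof -
  have "0 = (x + - x) ^ (q ^ t)" using q2 by simp
  also have "\<dots> = x ^ (q ^ t) + (- x) ^ (q ^ t)" by (rule frob)
  finally show ?thesis by (simp add: eq_neg_iff_add_eq_0 add.commute)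
qed

lemma qpow_inj: "q ^ i = q ^ j \<longleftrightarrow> i = j"
  using q2 by (simp add: power_inject_exp)

lemma qpow_less: "q ^ i < q ^ j \<longleftrightarrow> i < j"
  using q2 by simp

lemma qpow_le: "q ^ i \<le> q ^ j \<longleftrightarrow> i \<le> j"
  using q2 by simp

lemma i_less_qpow: "i < q ^ i"
proof -
  have "(2::nat) ^ i \<le> q ^ i" using q2 by (intro power_mono) auto
  then show ?thesis using less_exp[of i] by linarith
qed

lemma Lq_memI: "(\<And>i. coeff f i \<noteq> 0 \<Longrightarrow> \<exists>j. i = q ^ j) \<Longrightarrow> f \<in> Lq q"
  by (auto simp: Lq_def)

lemma Lq_memD: "f \<in> Lq q \<Longrightarrow> coeff f i \<noteq> 0 \<Longrightarrow> \<exists>j. i = q ^ j"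
  by (auto simp: Lq_def)

lemma Lq_0[simp]: "0 \<in> Lq q" by (auto simp: Lq_def)
lemma Lq_monom[simp]: "monom c (q ^ j) \<in> Lq q" by (auto simp: Lq_def coeff_monom split: if_splits)
lemma Lq_X: "monom 1 1 \<in> Lq q" using Lq_monom[of 1 0] by simp
lemma Lq_add: "f \<in> Lq q \<Longrightarrow> g \<in> Lq q \<Longrightarrow> f + g \<in> Lq q"
proof (intro Lq_memI)
  fix i assume "f \<in> Lq q" "g \<in> Lq q" "coeff (f + g) i \<noteq> 0"
  then have "coeff f i \<noteq> 0 \<or> coeff g i \<noteq> 0" by auto
  then show "\<exists>j. i = q ^ j" using \<open>f \<in> Lq q\<close> \<open>g \<in> Lq q\<close> by (auto dest: Lq_memD)
qed
lemma Lq_diff: "f \<in> Lq q \<Longrightarrow> g \<in> Lq q \<Longrightarrow> f - g \<in> Lq q"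
proof (intro Lq_memI)
  fix i assume "f \<in> Lq q" "g \<in> Lq q" "coeff (f - g) i \<noteq> 0"
  then have "coeff f i \<noteq> 0 \<or> coeff g i \<noteq> 0" by auto
  then show "\<exists>j. i = q ^ j" using \<open>f \<in> Lq q\<close> \<open>g \<in> Lq q\<close> by (auto dest: Lq_memD)
qed
lemma Lq_uminus: "f \<in> Lq q \<Longrightarrow> - f \<in> Lq q"
  by (auto simp: Lq_def)
lemma Lq_smult: "f \<in> Lq q \<Longrightarrow> smult c f \<in> Lq q"
  by (auto simp: Lq_def)
lemma Lq_sum: "(\<And>i. i \<in> A \<Longrightarrow> h i \<in> Lq q) \<Longrightarrow> sum h A \<in> Lq q"
  by (induction A rule: infinite_finite_induct) (auto intro: Lq_add)

lemma Lq_coeff0: "f \<in> Lq q \<Longrightarrow> coeff f 0 = 0"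
proof (rule ccontr)
  assume "f \<in> Lq q" "coeff f 0 \<noteq> 0"
  then obtain j where "0 = q ^ j" using Lq_memD[of f 0] by blast
  then show False using q2 by simp
qed

lemma Lq_rep:
  assumes "f \<in> Lq q" "degree f < q ^ N"
  shows "f = (\<Sum>j<N. monom (coeff f (q ^ j)) (q ^ j))"
proof (rule poly_eqI)
  fix i
  show "coeff f i = coeff (\<Sum>j<N. monom (coeff f (q ^ j)) (q ^ j)) i"
  proof (cases "\<exists>j. i = q ^ j")
    case True
    then obtain j where j: "i = q ^ j" by blast
    have s: "coeff (\<Sum>j<N. monom (coeff f (q ^ j)) (q ^ j)) i =
          (\<Sum>j'<N. if j' = j then coeff f (q ^ j) else 0)"
      by (simp add: coeff_sum coeff_monom j qpow_inj)
    show ?thesis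
    proof (cases "j < N")
      case True then show ?thesis using s j by simp
    next
      case False
      then have "q ^ N \<le> q ^ j" using qpow_le by simp
      then have "coeff f i = 0" using assms(2) j by (intro coeff_eq_0) simp
      then show ?thesis using s j False by simp
    qed
  next
    case False
    then have "coeff f i = 0" using Lq_memD[OF assms(1), of i] by blast
    moreover have "\<forall>j. q ^ j \<noteq> i" using False by auto
    ultimately show ?thesis by (simp add: coeff_sum coeff_monom)
  qed
qed

lemma Lq_power:
  fixes f :: "'a poly"
  assumes "f \<in> Lq q" shows "f ^ (q ^ t) \<in> Lq q"
proof -
  obtain N where N: "degree f < q ^ N" using i_less_qpow by blast
  have "f ^ (q ^ t) = (\<Sum>j<N. monom (coeff f (q ^ j)) (q ^ j)) ^ (q ^ t)"
    using Lq_rep[OF assms N] by simp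
  also have "\<dots> = (\<Sum>j<N. monom (coeff f (q ^ j)) (q ^ j) ^ (q ^ t))"
    by (rule frob_poly_sum[of "\<lambda>j. monom (coeff f (q ^ j)) (q ^ j)" "{..<N}" t])
  also have "\<dots> = (\<Sum>j<N. monom (coeff f (q ^ j) ^ (q ^ t)) (q ^ (j + t)))"
    by (simp add: monom_power power_add)
  finally show ?thesis by (simp only:) (intro Lq_sum Lq_monom)
qed

lemma pcompose_Lq_rep:
  assumes "h \<in> Lq q" "degree h < q ^ N"
  shows "pcompose h f = (\<Sum>j<N. smult (coeff h (q ^ j)) (f ^ (q ^ j)))"
  by (subst Lq_rep[OF assms]) (simp add: pcompose_sum pcompose_monom)

lemma Lq_pcompose:
  fixes h f :: "'a poly"
  assumes "h \<in> Lq q" "f \<in> Lq q" shows "pcompose h f \<in> Lq q"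
proof -
  obtain N where N: "degree h < q ^ N" using i_less_qpow by blast
  show ?thesis unfolding pcompose_Lq_rep[OF assms(1) N]
    by (intro Lq_sum Lq_smult Lq_power assms(2))
qed

lemma pcompose_additive:
  fixes h f g :: "'a poly"
  assumes "h \<in> Lq q" shows "pcompose h (f + g) = pcompose h f + pcompose h g"
proof -
  obtain N where N: "degree h < q ^ N" using i_less_qpow by blast
  show ?thesis unfolding pcompose_Lq_rep[OF assms N]
    by (simp only: frob_poly smult_add_right sum.distrib)
qed

lemma Lq_degree:
  assumes "f \<in> Lq q" "f \<noteq> 0" shows "\<exists>t. degree f = q ^ t"
  using Lq_memD[OF assms(1), of "degree f"] assms(2) by simp

lemma Lq_degree_pos:
  assumes "f \<in> Lq q" "f \<noteq> 0" shows "degree f \<ge> 1"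
proof -
  obtain t where "degree f = q ^ t" using Lq_degree[OF assms] by blast
  then show ?thesis using q2 by (simp add: one_le_power)
qed

lemma qdeg_eq:
  assumes "f \<in> Lq q" "f \<noteq> 0" "degree f = q ^ t" shows "qdeg q f = t"
proof -
  have fin: "finite {i. qcoeff q f i \<noteq> 0}"
  proof (rule finite_subset[of _ "{..degree f}"])
    show "{i. qcoeff q f i \<noteq> 0} \<subseteq> {..degree f}"
    proof
      fix i assume "i \<in> {i. qcoeff q f i \<noteq> 0}"
      then have "q ^ i \<le> degree f" by (auto simp: qcoeff_def intro: le_degree)
      then show "i \<in> {..degree f}" using i_less_qpow[of i] by simp
    qed
  qed simp
  have tin: "t \<in> {i. qcoeff q f i \<noteq> 0}" using assms leading_coeff_neq_0[of f] by (simp add: qcoeff_def)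
  have le: "i \<le> t" if "i \<in> {i. qcoeff q f i \<noteq> 0}" for i
  proof -
    from that have "q ^ i \<le> degree f" by (auto simp: qcoeff_def intro: le_degree)
    then show ?thesis using assms(3) qpow_le by simp
  qed
  show ?thesis unfolding qdeg_def using fin tin le by (intro Max_eqI) auto
qed

end



context fqs begin

lemma frob_poly_neg: "(- (f::'a poly)) ^ (q ^ t) = - (f ^ (q ^ t))"
proof -
  have "0 = (f + - f) ^ (q ^ t)" using q2 by simp
  also have "\<dots> = f ^ (q ^ t) + (- f) ^ (q ^ t)" by (rule frob_poly)
  finally show ?thesis by (simp add: eq_neg_iff_add_eq_0 add.commute)
qed

lemma Fq_0: "(0::'a) \<in> Fq q" using q2 by (simp add: Fq_def)
lemma Fq_neg: "(c::'a) \<in> Fq q \<Longrightarrow> - c \<in> Fq q"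
  using frob_neg[of c 1] by (simp add: Fq_def)
lemma Fq_add: "(c::'a) \<in> Fq q \<Longrightarrow> d \<in> Fq q \<Longrightarrow> c + d \<in> Fq q"
  using frob[of c d 1] by (simp add: Fq_def)
lemma Fq_diff: "(c::'a) \<in> Fq q \<Longrightarrow> d \<in> Fq q \<Longrightarrow> c - d \<in> Fq q"
  using Fq_add[of c "- d"] Fq_neg[of d] by simp
lemma Fq_pow: "(c::'a) \<in> Fq q \<Longrightarrow> c ^ (q ^ t) = c"
proof (induction t)
  case 0 then show ?case by simp
next
  case (Suc t)
  have "c ^ (q ^ Suc t) = (c ^ (q ^ t)) ^ q" by (metis power_Suc2 power_mult)
  then show ?case using Suc by (simp add: Fq_def)
qed

lemma poly_Lq_scale:
  fixes h :: "'a poly"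
  assumes "h \<in> Lq q" "c \<in> Fq q"
  shows "poly h (c * x) = c * poly h x"
proof -
  obtain N where N: "degree h < q ^ N" using i_less_qpow by blast
  have "poly h (c * x) = (\<Sum>j<N. coeff h (q ^ j) * (c * x) ^ (q ^ j))"
    by (subst Lq_rep[OF assms(1) N]) (simp add: poly_sum poly_monom)
  also have "\<dots> = (\<Sum>j<N. c * (coeff h (q ^ j) * x ^ (q ^ j)))"
    by (intro sum.cong refl) (simp add: power_mult_distrib Fq_pow[OF assms(2)])
  also have "\<dots> = c * poly h x"
    by (subst (2) Lq_rep[OF assms(1) N]) (simp add: poly_sum poly_monom sum_distrib_left)
  finally show ?thesis .
qed

end

locale fqs2 = fqs q e ty for q e and ty :: "'a::{field,finite} itself" +
  fixes m :: nat
  assumes card: "card (UNIV :: 'a set) = q ^ m" and m1: "m \<ge> 1"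
begin

lemma fermat: "(x::'a) ^ card (UNIV :: 'a set) = x"
proof (cases "x = 0")
  case False
  have "x * (\<Prod>y\<in>UNIV-{0}. x * y) = x * x ^ (card (UNIV :: 'a set) - 1) * \<Prod>(UNIV-{0})"
    by (simp add: prod.distrib mult_ac)
  also have "x * x ^ (card (UNIV :: 'a set) - 1) = x ^ Suc (card (UNIV :: 'a set) - 1)"
    by (subst power_Suc) auto
  also have "Suc (card (UNIV :: 'a set) - 1) = card (UNIV :: 'a set)"
    using finite_UNIV_card_ge_0[where ?'a = 'a] by simp
  also have "(\<Prod>y\<in>UNIV-{0}. x * y) = (\<Prod>y\<in>UNIV-{0}. y)"
    by (rule prod.reindex_bij_witness[of _ "\<lambda>y. y / x" "\<lambda>y. x * y"]) (use False in auto)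
  finally show ?thesis
    by simp
qed (use finite_UNIV_card_ge_0[where ?'a = 'a] in auto)

lemma degree_monom_diff:
  assumes "b < a" "c \<noteq> 0"
  shows "degree (monom (c::'a) a - monom d b) = a"
proof -
  have "degree (- monom d b) < degree (monom c a)"
    using assms degree_monom_le[of d b] by (simp add: degree_monom_eq)
  then have "degree (monom c a + - monom d b) = degree (monom c a)"
    by (rule degree_add_eq_left)
  then have "degree (monom c a + - monom d b) = a" using assms by (simp add: degree_monom_eq)
  then show ?thesis by simp
qed

lemma card_Fq: "card (Fq q :: 'a set) = q"
proof -
  define T :: "'a poly" where "T = monom 1 q - monom 1 1"
  define H where "H = (\<Sum>i<m. T ^ (q ^ i - 1))"
  have Tpow: "T ^ (q ^ i) = monom 1 (q ^ Suc i) - monom 1 (q ^ i)" for i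
  proof -
    have "T ^ (q ^ i) = (monom 1 q + - monom 1 1) ^ (q ^ i)" by (simp add: T_def)
    also have "\<dots> = (monom 1 q) ^ (q ^ i) + (- monom 1 1) ^ (q ^ i)" by (rule frob_poly)
    also have "\<dots> = monom 1 (q ^ Suc i) - monom 1 (q ^ i)"
      by (simp add: frob_poly_neg monom_power)
    finally show ?thesis .
  qed
  have TH: "T * H = monom 1 (q ^ m) - monom 1 1"
  proof -
    have "T * H = (\<Sum>i<m. T * T ^ (q ^ i - 1))" by (simp add: H_def sum_distrib_left)
    also have "\<dots> = (\<Sum>i<m. T ^ (q ^ i))"
    proof (intro sum.cong refl)
      fix i
      have "q ^ i \<ge> 1" using q2 by (simp add: one_le_power)
      then have "Suc (q ^ i - 1) = q ^ i" by simp
      then show "T * T ^ (q ^ i - 1) = T ^ (q ^ i)" by (metis power_Suc)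
    qed
    also have "\<dots> = (\<Sum>i<m. monom 1 (q ^ Suc i) - monom 1 (q ^ i))" by (simp add: Tpow)
    also have "\<dots> = monom 1 (q ^ m) - monom 1 (q ^ 0)"
      by (rule sum_lessThan_telescope[of "\<lambda>i. monom 1 (q ^ i)"])
    finally show ?thesis by simp
  qed
  have qm: "q ^ m > 1" using q2 m1
    by (metis One_nat_def less_le_trans not_one_le_zero numeral_le_one_iff one_less_power
        semiring_norm(69) Suc_1 Suc_le_eq le_Suc_eq zero_less_one le_numeral_extra(4) nat_le_linear
        less_2_cases_iff not_less_eq_eq power_one_right)
  have degTH: "degree (T * H) = q ^ m"
    unfolding TH using qm by (intro degree_monom_diff) auto
  have degT: "degree T = q" unfolding T_def using q2 by (intro degree_monom_diff) auto
  have T0: "T \<noteq> 0" using degT q2 by auto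
  have H0: "H \<noteq> 0" using degTH qm q2 by auto
  have degH: "degree H = q ^ m - q" using degTH degree_mult_eq[OF T0 H0] degT by simp
  have roots: "poly (T * H) x = 0" for x
    unfolding TH using fermat[of x] card by (simp add: poly_monom)
  have "UNIV = {x. poly T x = 0} \<union> {x. poly H x = 0}" using roots by auto
  then have "q ^ m \<le> card {x. poly T x = 0} + card {x. poly H x = 0}"
    using card card_Un_le[of "{x. poly T x = 0}" "{x. poly H x = 0}"] by simp
  moreover have "card {x. poly H x = 0} \<le> q ^ m - q" using card_poly_roots_bound[OF H0] degH by simp
  moreover have "card {x. poly T x = 0} \<le> q" using card_poly_roots_bound[OF T0] degT by simp
  moreover have "q \<le> q ^ m" using m1 q2
    by (metis power_increasing power_one_right not_one_le_zero le_trans one_le_numeral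
        Suc_1 Suc_le_lessD less_imp_le_nat zero_less_Suc)
  ultimately have "card {x. poly T x = 0} = q" by linarith
  moreover have "{x. poly T x = 0} = Fq q"
    by (auto simp: T_def poly_monom Fq_def)
  ultimately show ?thesis by simp
qed

end



context fqs2 begin

lemma prod_Fq_lin:
  "(\<Prod>c\<in>Fq q. [:- (c * b), 1:]) = monom 1 q - monom ((b::'a) ^ (q - 1)) 1"
proof (cases "b = 0")
  case True
  have "(\<Prod>c\<in>Fq q. [:- (c * b), 1:]) = [:0, 1:] ^ card (Fq q :: 'a set)"
    using True by simp
  also have "\<dots> = monom 1 q" using card_Fq by (simp add: monom_altdef)
  finally show ?thesis using True q2 by (simp add: power_0_left)
next
  case False
  let ?L = "(\<Prod>c\<in>Fq q. [:- (c * b), 1:])"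
  let ?R = "monom 1 q - monom ((b::'a) ^ (q - 1)) 1"
  have degL: "degree ?L = q"
    by (subst degree_prod_sum_eq) (auto simp: card_Fq)
  have lcL: "lead_coeff ?L = 1" by (simp add: lead_coeff_prod)
  have degR: "degree ?R = q" using q2 by (intro degree_monom_diff) auto
  show ?thesis
  proof (rule poly_eqI_degree_lead_coeff[where n = q and A = "(\<lambda>c. c * b) ` Fq q"])
    show "coeff ?L q = coeff ?R q" using lcL degL q2 by (simp add: coeff_monom)
    have "card ((\<lambda>c. c * b) ` Fq q) = card (Fq q :: 'a set)"
      using False by (intro card_image inj_onI) auto
    then show "q \<le> card ((\<lambda>c. c * b) ` Fq q)" using card_Fq by simp
    show "degree ?L \<le> q" using degL by simp
    show "degree ?R \<le> q" using degR by simp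
    fix z assume "z \<in> (\<lambda>c. c * b) ` Fq q"
    then obtain c where c: "c \<in> Fq q" "z = c * b" by auto
    have "poly ?L z = 0" using c by (subst poly_prod, subst prod_zero_iff) auto
    moreover have "poly ?R z = 0"
    proof -
      have cq: "c ^ q = c" using c(1) by (simp add: Fq_def)
      have "q = Suc (q - 1)" using q2 by simp
      then have "b ^ (q - 1) * b = b ^ q" by (metis power_Suc2)
      then show ?thesis using c(2) cq by (simp add: poly_monom power_mult_distrib algebra_simps)
    qed
    ultimately show "poly ?L z = poly ?R z" by simp
  qed
qed

lemma span_0: "Fq_span q 0 g = {0}"
  by (auto simp: Fq_span_def)

lemma span_Suc: "Fq_span q (Suc j) g = (\<Union>c\<in>Fq q. (\<lambda>u. u + c * g (Suc j)) ` Fq_span q j g)"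
proof
  show "Fq_span q (Suc j) g \<subseteq> (\<Union>c\<in>Fq q. (\<lambda>u. u + c * g (Suc j)) ` Fq_span q j g)"
  proof
    fix x assume "x \<in> Fq_span q (Suc j) g"
    then obtain c where c: "\<forall>i\<in>{1..Suc j}. c i \<in> Fq q" "x = (\<Sum>i=1..Suc j. c i * g i)"
      by (auto simp: Fq_span_def)
    have "x = (\<Sum>i=1..j. c i * g i) + c (Suc j) * g (Suc j)" using c(2) by simp
    moreover have "(\<Sum>i=1..j. c i * g i) \<in> Fq_span q j g" using c(1) by (auto simp: Fq_span_def)
    moreover have "c (Suc j) \<in> Fq q" using c(1) by auto
    ultimately show "x \<in> (\<Union>c\<in>Fq q. (\<lambda>u. u + c * g (Suc j)) ` Fq_span q j g)" by blast
  qed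
  show "(\<Union>c\<in>Fq q. (\<lambda>u. u + c * g (Suc j)) ` Fq_span q j g) \<subseteq> Fq_span q (Suc j) g"
  proof
    fix x assume "x \<in> (\<Union>c\<in>Fq q. (\<lambda>u. u + c * g (Suc j)) ` Fq_span q j g)"
    then obtain c' u where cu: "c' \<in> Fq q" "u \<in> Fq_span q j g" "x = u + c' * g (Suc j)" by auto
    then obtain c where c: "\<forall>i\<in>{1..j}. c i \<in> Fq q" "u = (\<Sum>i=1..j. c i * g i)"
      by (auto simp: Fq_span_def)
    define d where "d = c(Suc j := c')"
    have "(\<Sum>i=1..j. d i * g i) = (\<Sum>i=1..j. c i * g i)" by (intro sum.cong) (auto simp: d_def)
    then have "x = (\<Sum>i=1..Suc j. d i * g i)" using cu c by (simp add: d_def)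
    moreover have "\<forall>i\<in>{1..Suc j}. d i \<in> Fq q" using c(1) cu(1) by (auto simp: d_def)
    ultimately show "x \<in> Fq_span q (Suc j) g" by (auto simp: Fq_span_def)
  qed
qed

lemma span_disj:
  fixes g :: "nat \<Rightarrow> 'a"
  assumes li: "lin_indep_Fq q n g" and j: "Suc j \<le> n"
    and c: "c1 \<in> Fq q" "c2 \<in> Fq q" "c1 \<noteq> c2"
    and u: "u1 \<in> Fq_span q j g" "u2 \<in> Fq_span q j g"
    and eq: "u1 + c1 * g (Suc j) = u2 + c2 * g (Suc j)"
  shows False
proof -
  obtain d1 where d1: "\<forall>i\<in>{1..j}. d1 i \<in> Fq q" "u1 = (\<Sum>i=1..j. d1 i * g i)"
    using u(1) by (auto simp: Fq_span_def)
  obtain d2 where d2: "\<forall>i\<in>{1..j}. d2 i \<in> Fq q" "u2 = (\<Sum>i=1..j. d2 i * g i)"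
    using u(2) by (auto simp: Fq_span_def)
  define d where "d i = (if i \<in> {..j} then d1 i - d2 i else 0) + (if i = Suc j then c1 - c2 else 0)" for i
  have "(\<Sum>i=1..n. d i * g i) = (\<Sum>i=1..n. (if i \<in> {..j} then (d1 i - d2 i) * g i else 0))
          + (\<Sum>i=1..n. (if i = Suc j then (c1 - c2) * g i else 0))"
  proof -
    have "d i * g i = (if i \<in> {..j} then (d1 i - d2 i) * g i else 0) + (if i = Suc j then (c1 - c2) * g i else 0)" for i
      unfolding d_def by (auto simp: distrib_right)
    then show ?thesis by (simp add: sum.distrib)
  qed
  also have "(\<Sum>i=1..n. (if i \<in> {..j} then (d1 i - d2 i) * g i else 0)) = (\<Sum>i\<in>{1..n} \<inter> {..j}. (d1 i - d2 i) * g i)"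
    by (rule sum.inter_restrict[symmetric]) simp
  also have "{1..n} \<inter> {..j} = {1..j}" using j by auto
  also have "(\<Sum>i=1..n. (if i = Suc j then (c1 - c2) * g i else 0)) = (c1 - c2) * g (Suc j)"
    using j by (simp add: sum.delta)
  also have "(\<Sum>i=1..j. (d1 i - d2 i) * g i) = u1 - u2"
    using d1(2) d2(2) by (simp add: left_diff_distrib sum_subtractf)
  finally have "(\<Sum>i=1..n. d i * g i) = 0" using eq by (simp add: algebra_simps)
  moreover have "\<forall>i\<in>{1..n}. d i \<in> Fq q"
    using d1(1) d2(1) c by (auto simp: d_def intro!: Fq_add Fq_diff Fq_0)
  ultimately have "\<forall>i\<in>{1..n}. d i = 0" using li unfolding lin_indep_Fq_def by blast
  then have "d (Suc j) = 0" using j by auto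
  then show False using c(3) by (simp add: d_def)
qed

end



context fqs2 begin

lemma Pi_step:
  fixes g :: "nat \<Rightarrow> 'a"
  assumes li: "lin_indep_Fq q n g" and j: "Suc j \<le> n"
    and IH: "(\<Prod>u\<in>Fq_span q j g. [:- u, 1:]) \<in> Lq q"
  shows "(\<Prod>u\<in>Fq_span q (Suc j) g. [:- u, 1:]) =
           pcompose (monom 1 q - monom ((poly (\<Prod>u\<in>Fq_span q j g. [:- u, 1:]) (g (Suc j))) ^ (q - 1)) 1)
                    (\<Prod>u\<in>Fq_span q j g. [:- u, 1:])"
proof -
  define P where "P = (\<Prod>u\<in>Fq_span q j g. [:- u, 1:])"
  define a where "a = g (Suc j)"
  define b where "b = poly P a"
  have "(\<Prod>u\<in>Fq_span q (Suc j) g. [:- u, 1:]) =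
        (\<Prod>c\<in>Fq q. \<Prod>u\<in>(\<lambda>u. u + c * a) ` Fq_span q j g. [:- u, 1:])"
    unfolding span_Suc a_def
  proof (rule prod.UNION_disjoint)
    show "\<forall>i\<in>Fq q. \<forall>j'\<in>Fq q. i \<noteq> j' \<longrightarrow>
      (\<lambda>u. u + i * g (Suc j)) ` Fq_span q j g \<inter> (\<lambda>u. u + j' * g (Suc j)) ` Fq_span q j g = {}"
      using span_disj[OF li j] by blast
  qed auto
  also have "\<dots> = (\<Prod>c\<in>Fq q. pcompose P [:- (c * a), 1:])"
  proof (intro prod.cong refl)
    fix c
    have "(\<Prod>u\<in>(\<lambda>u. u + c * a) ` Fq_span q j g. [:- u, 1:]) = (\<Prod>u\<in>Fq_span q j g. [:- (u + c * a), 1:])"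
      by (subst prod.reindex) (auto intro: inj_onI)
    also have "\<dots> = (\<Prod>u\<in>Fq_span q j g. pcompose [:- u, 1:] [:- (c * a), 1:])"
      by (intro prod.cong refl) (simp add: pcompose_pCons)
    also have "\<dots> = pcompose P [:- (c * a), 1:]" by (simp add: P_def pcompose_prod)
    finally show "(\<Prod>u\<in>(\<lambda>u. u + c * a) ` Fq_span q j g. [:- u, 1:]) = pcompose P [:- (c * a), 1:]" .
  qed
  also have "\<dots> = (\<Prod>c\<in>Fq q. pcompose [:- (c * b), 1:] P)"
  proof (intro prod.cong refl)
    fix c :: 'a assume c: "c \<in> Fq q"
    have PL: "P \<in> Lq q" using IH unfolding P_def .
    have e1: "[:- (c * a), 1:] = [:0, 1:] + [:- (c * a):]" by simp
    have e2: "pcompose P ([:0, 1:] + [:- (c * a):]) = pcompose P [:0, 1:] + pcompose P [:- (c * a):]"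
      by (rule pcompose_additive[OF PL])
    have "pcompose P [:- (c * a), 1:] = P + [:poly P (- (c * a)):]"
      unfolding e1 e2 pcompose_idR pcompose_pCons_0 ..
    also have "poly P (- (c * a)) = - (c * b)"
      using poly_Lq_scale[OF IH[folded P_def] Fq_neg[OF c], of a] by (simp add: b_def)
    also have "P + [:- (c * b):] = pcompose [:- (c * b), 1:] P" by (simp add: pcompose_pCons)
    finally show "pcompose P [:- (c * a), 1:] = pcompose [:- (c * b), 1:] P" .
  qed
  also have "\<dots> = pcompose (\<Prod>c\<in>Fq q. [:- (c * b), 1:]) P" by (simp add: pcompose_prod)
  also have "\<dots> = pcompose (monom 1 q - monom (b ^ (q - 1)) 1) P" by (simp add: prod_Fq_lin)
  finally show ?thesis by (simp add: P_def b_def a_def)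
qed

lemma Pi_props:
  fixes g :: "nat \<Rightarrow> 'a"
  assumes li: "lin_indep_Fq q n g" and j: "j \<le> n"
  shows "(\<Prod>u\<in>Fq_span q j g. [:- u, 1:]) \<in> Lq q \<and> degree (\<Prod>u\<in>Fq_span q j g. [:- u, 1:]) = q ^ j"
  using j
proof (induction j)
  case 0
  have "(\<Prod>u\<in>Fq_span q 0 g. [:- u, 1:]) = monom 1 (q ^ 0)" by (simp add: span_0 monom_altdef)
  then show ?case using Lq_monom[of 1 0] by (simp add: degree_monom_eq)
next
  case (Suc j)
  then have IH: "(\<Prod>u\<in>Fq_span q j g. [:- u, 1:]) \<in> Lq q" "degree (\<Prod>u\<in>Fq_span q j g. [:- u, 1:]) = q ^ j"
    by auto
  define b where "b = poly (\<Prod>u\<in>Fq_span q j g. [:- u, 1:]) (g (Suc j))"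
  have eq: "(\<Prod>u\<in>Fq_span q (Suc j) g. [:- u, 1:]) =
           pcompose (monom 1 q - monom (b ^ (q - 1)) 1) (\<Prod>u\<in>Fq_span q j g. [:- u, 1:])"
    unfolding b_def by (rule Pi_step[OF li Suc.prems IH(1)])
  have TL: "monom 1 q - monom (b ^ (q - 1)) 1 \<in> Lq q"
    using Lq_monom[of 1 1] Lq_monom[of "b ^ (q - 1)" 0] by (intro Lq_diff) auto
  have degT: "degree (monom 1 q - monom (b ^ (q - 1)) 1) = q" using q2 by (intro degree_monom_diff) auto
  show ?case unfolding eq
    using Lq_pcompose[OF TL IH(1)] degT IH(2) by (simp add: degree_pcompose)
qed

lemma Pi_g_props:
  fixes g :: "nat \<Rightarrow> 'a"
  assumes li: "lin_indep_Fq q n g"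
  shows "Pi_g q n g \<in> Lq q" "degree (Pi_g q n g) = q ^ n" "lead_coeff (Pi_g q n g) = 1"
proof -
  show "Pi_g q n g \<in> Lq q" "degree (Pi_g q n g) = q ^ n"
    using Pi_props[OF li order_refl] by (auto simp: Pi_g_def)
  show "lead_coeff (Pi_g q n g) = 1" unfolding Pi_g_def lead_coeff_prod by simp
qed

end



context fqs begin

lemma Lq_const_mult:
  assumes "degree h = 0" "f \<in> Lq q" shows "h * f \<in> Lq q"
proof -
  have "h = [:coeff h 0:]" using assms(1) by (metis degree_0_id)
  then have "h * f = smult (coeff h 0) f" by (metis mult_smult_left mult_1 pCons_one smult_one)
  then show ?thesis using assms(2) Lq_smult by simp
qed

lemma det_Lq:
  fixes A :: "'a poly mat"
  assumes dims: "A \<in> carrier_mat n n" and n: "n \<ge> 1"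
    and cst: "\<And>j l. j < n \<Longrightarrow> l < n - 1 \<Longrightarrow> degree (A $$ (j, l)) = 0"
    and lst: "\<And>j. j < n \<Longrightarrow> A $$ (j, n - 1) = monom 1 (q ^ j)"
  shows "det A \<in> Lq q"
proof -
  have dr: "dim_row A = n" "dim_col A = n" using dims by auto
  have "det A = (\<Sum>p | p permutes {0..<n}. of_int (sign p) * (\<Prod>i = 0..<n. A $$ (i, p i)))"
    unfolding det_def dr by simp
  also have "\<dots> \<in> Lq q"
  proof (intro Lq_sum)
    fix p assume "p \<in> {p. p permutes {0..<n}}"
    then have p: "p permutes {0..<n}" by simp
    have "n - 1 \<in> p ` {0..<n}" using permutes_image[OF p] n by auto
    then obtain i0 where i0: "i0 < n" "p i0 = n - 1" by auto
    have pin: "p i < n" if "i < n" for i using permutes_in_image[OF p] that by auto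
    have pne: "p i \<noteq> n - 1" if "i < n" "i \<noteq> i0" for i
      using permutes_inj[OF p] i0 that by (metis injD)
    have "(\<Prod>i = 0..<n. A $$ (i, p i)) = A $$ (i0, p i0) * (\<Prod>i\<in>{0..<n} - {i0}. A $$ (i, p i))"
      using i0 by (subst prod.remove[of _ i0]) auto
    also have "A $$ (i0, p i0) = monom 1 (q ^ i0)" using i0 lst by simp
    finally have eq: "(\<Prod>i = 0..<n. A $$ (i, p i)) = (\<Prod>i\<in>{0..<n} - {i0}. A $$ (i, p i)) * monom 1 (q ^ i0)"
      by (simp add: mult.commute)
    have "degree (\<Prod>i\<in>{0..<n} - {i0}. A $$ (i, p i)) \<le> sum (degree \<circ> (\<lambda>i. A $$ (i, p i))) ({0..<n} - {i0})"
      by (rule degree_prod_sum_le) simp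
    also have "\<dots> = 0"
    proof (intro sum.neutral ballI)
      fix i assume "i \<in> {0..<n} - {i0}"
      then have "i < n" "i \<noteq> i0" by auto
      then have "p i < n - 1" using pin pne by fastforce
      then show "(degree \<circ> (\<lambda>i. A $$ (i, p i))) i = 0" using cst \<open>i < n\<close> by simp
    qed
    finally have "degree (\<Prod>i\<in>{0..<n} - {i0}. A $$ (i, p i)) = 0" by simp
    then have "(\<Prod>i = 0..<n. A $$ (i, p i)) \<in> Lq q" unfolding eq
      by (intro Lq_const_mult Lq_monom)
    then show "of_int (sign p) * (\<Prod>i = 0..<n. A $$ (i, p i)) \<in> Lq q"
      by (intro Lq_const_mult degree_of_int)
  qed
  finally show ?thesis .
qed

lemma Lambda_Lq:
  fixes g r :: "nat \<Rightarrow> 'a"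
  assumes n: "n \<ge> 1"
  shows "Lambda_g q n g r \<in> Lq q"
  unfolding Lambda_g_def
proof (intro Lq_sum Lq_smult)
  fix i assume i: "i \<in> {1..n}"
  show "det (D_g q n g i) \<in> Lq q"
  proof (rule det_Lq[OF _ n])
    show "D_g q n g i \<in> carrier_mat n n" by (simp add: D_g_def)
    fix j assume j: "j < n"
    show "D_g q n g i $$ (j, n - 1) = monom 1 (q ^ j)"
      using i j n by (simp add: D_g_def Let_def)
    fix l assume l: "l < n - 1"
    show "degree (D_g q n g i $$ (j, l)) = 0"
      using i j l n by (simp add: D_g_def Let_def; arith)
  qed
qed

end



context fqs begin

lemma pred_deg:
  fixes a c f1 f2 h1 h2 :: "'a poly"
  assumes L: "a \<in> Lq q" "c \<in> Lq q" "h2 \<in> Lq q" "f1 \<noteq> 0" "h2 \<noteq> 0"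
    and d1: "degree f2 * K < degree f1" and d2: "degree h1 \<le> degree h2 * K" and K: "K \<ge> 1"
  shows "(degree (pcompose a f1 + pcompose c h1) < B \<and> degree (pcompose a f2 + pcompose c h2) * K < B)
     \<longleftrightarrow> (degree a * degree f1 < B \<and> degree c * (degree h2 * K) < B)"
    (is "?L \<longleftrightarrow> ?R")
proof -
  define A where "A = degree a * degree f1"
  define C where "C = degree c * (degree h2 * K)"
  have dA: "degree (pcompose a f1) = A" by (simp add: degree_pcompose A_def)
  have dch1: "degree (pcompose c h1) \<le> C"
    using d2 by (simp add: degree_pcompose C_def mult_le_mono2)
  have daf2: "degree (pcompose a f2) * K \<le> A"
  proof -
    have "degree a * (degree f2 * K) \<le> degree a * degree f1" using d1 by (intro mult_le_mono2) simp
    then show ?thesis by (simp add: degree_pcompose A_def mult.assoc)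
  qed
  have dch2: "degree (pcompose c h2) * K = C" by (simp add: degree_pcompose C_def mult.assoc)
  show ?thesis
  proof
    assume R: ?R
    then have AB: "A < B" and CB: "C < B" by (auto simp: A_def C_def)
    have "degree (pcompose a f1 + pcompose c h1) \<le> max A C"
      using degree_add_le_max[of "pcompose a f1" "pcompose c h1"] dA dch1 by linarith
    moreover have "degree (pcompose a f2 + pcompose c h2) * K \<le> max A C"
    proof -
      have "degree (pcompose a f2 + pcompose c h2) * K \<le> max (degree (pcompose a f2)) (degree (pcompose c h2)) * K"
        using degree_add_le_max[of "pcompose a f2" "pcompose c h2"] by (intro mult_le_mono1)
      also have "\<dots> = max (degree (pcompose a f2) * K) (degree (pcompose c h2) * K)"
        by (simp add: max_def)
      also have "\<dots> \<le> max A C" using daf2 dch2 by simp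
      finally show ?thesis .
    qed
    ultimately show ?L using AB CB by linarith
  next
    assume Lh: ?L
    show ?R
    proof (cases "A \<le> C")
      case False
      then have "degree (pcompose c h1) < degree (pcompose a f1)" using dA dch1 by linarith
      then have "degree (pcompose a f1 + pcompose c h1) = A" using dA by (simp add: degree_add_eq_left)
      then show ?R using Lh False by (simp add: A_def C_def)
    next
      case True
      show ?R
      proof (cases "c = 0")
        case True
        then have "C = 0" by (simp add: C_def)
        then have "A = 0" using \<open>A \<le> C\<close> by simp
        moreover have "0 < B" using Lh by linarith
        ultimately show ?R using \<open>C = 0\<close> unfolding A_def[symmetric] C_def[symmetric] by simp
      next
        case False
        have dc: "degree c \<ge> 1" using Lq_degree_pos[OF L(2) False] .
        have dh2: "degree h2 \<ge> 1" using Lq_degree_pos[OF L(3) L(5)] .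
        have Cpos: "C \<ge> 1" unfolding C_def using dc dh2 K by simp
        have "degree (pcompose a f2) * K < degree (pcompose c h2) * K"
        proof (cases "a = 0")
          case True then show ?thesis using Cpos dch2 by simp
        next
          case False
          have da: "degree a \<ge> 1" using Lq_degree_pos[OF L(1) False] .
          have "degree a * (degree f2 * K) < degree a * degree f1" using d1 da by simp
          then have "degree (pcompose a f2) * K < A" by (simp add: degree_pcompose A_def mult.assoc)
          then show ?thesis using \<open>A \<le> C\<close> dch2 by linarith
        qed
        then have "degree (pcompose a f2) < degree (pcompose c h2)" by simp
        then have "degree (pcompose a f2 + pcompose c h2) = degree (pcompose c h2)"
          by (simp add: degree_add_eq_right)
        then have "C < B" using Lh dch2 by simp
        then show ?R using \<open>A \<le> C\<close> by (simp add: A_def C_def)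
      qed
    qed
  qed
qed

end



context fqs begin

definition Pt :: "nat \<Rightarrow> 'a poly set" where
  "Pt t = {f. f \<in> Lq q \<and> degree f < q ^ t}"

lemma Pt_bij: "bij_betw (\<lambda>f. restrict (\<lambda>j. coeff f (q ^ j)) {..<t}) (Pt t) ({..<t} \<rightarrow>\<^sub>E (UNIV :: 'a set))"
proof (rule bij_betw_imageI)
  show "inj_on (\<lambda>f. restrict (\<lambda>j. coeff f (q ^ j)) {..<t}) (Pt t)"
  proof (rule inj_onI)
    fix f f' assume f: "f \<in> Pt t" and f': "f' \<in> Pt t"
      and eq: "restrict (\<lambda>j. coeff f (q ^ j)) {..<t} = restrict (\<lambda>j. coeff f' (q ^ j)) {..<t}"
    have c: "coeff f (q ^ j) = coeff f' (q ^ j)" if "j < t" for j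
      using fun_cong[OF eq, of j] that by simp
    have "f = (\<Sum>j<t. monom (coeff f (q ^ j)) (q ^ j))" using f by (intro Lq_rep) (auto simp: Pt_def)
    also have "\<dots> = (\<Sum>j<t. monom (coeff f' (q ^ j)) (q ^ j))" using c by (intro sum.cong) auto
    also have "\<dots> = f'" using f' by (intro Lq_rep[symmetric]) (auto simp: Pt_def)
    finally show "f = f'" .
  qed
  show "(\<lambda>f. restrict (\<lambda>j. coeff f (q ^ j)) {..<t}) ` Pt t = {..<t} \<rightarrow>\<^sub>E UNIV"
  proof
    show "(\<lambda>f. restrict (\<lambda>j. coeff f (q ^ j)) {..<t}) ` Pt t \<subseteq> {..<t} \<rightarrow>\<^sub>E UNIV"
    proof (rule image_subsetI)
      fix f show "restrict (\<lambda>j. coeff f (q ^ j)) {..<t} \<in> {..<t} \<rightarrow>\<^sub>E (UNIV :: 'a set)"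
        by (rule restrict_PiE_iff[THEN iffD2]) simp
    qed
    show "{..<t} \<rightarrow>\<^sub>E UNIV \<subseteq> (\<lambda>f. restrict (\<lambda>j. coeff f (q ^ j)) {..<t}) ` Pt t"
    proof
      fix c :: "nat \<Rightarrow> 'a" assume c: "c \<in> {..<t} \<rightarrow>\<^sub>E UNIV"
      define f where "f = (\<Sum>j<t. monom (c j) (q ^ j))"
      have cf: "coeff f (q ^ j) = c j" if "j < t" for j
        using that by (simp add: f_def coeff_sum coeff_monom qpow_inj)
      have "coeff f i = 0" if "i \<ge> q ^ t" for i
      proof -
        have "\<forall>j<t. q ^ j \<noteq> i" using that qpow_less by (metis leD)
        then show ?thesis by (simp add: f_def coeff_sum coeff_monom)
      qed
      then have "degree f \<le> q ^ t - 1" by (intro degree_le) auto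
      moreover have "q ^ t \<ge> 1" using q2 by (simp add: one_le_power)
      ultimately have "degree f < q ^ t" by linarith
      moreover have "f \<in> Lq q" by (simp add: f_def Lq_sum)
      ultimately have "f \<in> Pt t" by (simp add: Pt_def)
      moreover have "restrict (\<lambda>j. coeff f (q ^ j)) {..<t} = c"
        using c cf by (auto simp: restrict_def PiE_def extensional_def)
      ultimately show "c \<in> (\<lambda>f. restrict (\<lambda>j. coeff f (q ^ j)) {..<t}) ` Pt t" by force
    qed
  qed
qed

lemma card_Pt: "card (Pt t) = card (UNIV :: 'a set) ^ t"
proof -
  have "card (Pt t) = card ({..<t} \<rightarrow>\<^sub>E (UNIV :: 'a set))" using bij_betw_same_card[OF Pt_bij] .
  also have "\<dots> = card (UNIV :: 'a set) ^ t" by (simp add: card_PiE)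
  finally show ?thesis .
qed

lemma finite_Pt: "finite (Pt t)"
  using bij_betw_finite[OF Pt_bij] by (simp add: finite_PiE)

lemma division:
  fixes P h :: "'a poly"
  assumes P: "P \<in> Lq q" "degree P = q ^ n" "lead_coeff P = 1" and h: "h \<in> Lq q"
  shows "\<exists>\<sigma> \<rho>. \<sigma> \<in> Lq q \<and> \<rho> \<in> Lq q \<and> degree \<rho> < q ^ n \<and> h = pcompose \<sigma> P + \<rho>"
  using h
proof (induction "degree h" arbitrary: h rule: less_induct)
  case less
  show ?case
  proof (cases "degree h < q ^ n")
    case True
    then show ?thesis using less.prems by (intro exI[of _ 0] exI[of _ h]) auto
  next
    case False
    then have h0: "h \<noteq> 0" using q2 by (auto simp: one_le_power)
    obtain t where t: "degree h = q ^ t" using Lq_degree[OF less.prems h0] by blast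
    have tn: "n \<le> t" using False t qpow_less by (metis not_le)
    define c where "c = lead_coeff h"
    have c0: "c \<noteq> 0" using h0 by (simp add: c_def)
    define s where "s = monom c (q ^ (t - n))"
    have sP: "pcompose s P = smult c (P ^ (q ^ (t - n)))" by (simp add: s_def pcompose_monom)
    have qt: "q ^ (t - n) * q ^ n = q ^ t" using tn by (simp add: power_add[symmetric])
    have P0: "P \<noteq> 0" using P(3) by auto
    have dsP: "degree (pcompose s P) = q ^ t"
      using c0 P(2) qt P0 by (simp add: sP degree_power_eq mult.commute)
    have dPk: "degree (P ^ q ^ (t - n)) = q ^ t" using dsP c0 by (simp add: sP)
    have "lead_coeff (P ^ q ^ (t - n)) = 1" by (simp add: lead_coeff_power P(3))
    then have cPk: "coeff (P ^ q ^ (t - n)) (q ^ t) = 1" using dPk by simp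
    have lsP: "lead_coeff (pcompose s P) = c"
      using dsP cPk by (simp add: sP)
    define h' where "h' = h - pcompose s P"
    have sL: "s \<in> Lq q" by (simp add: s_def)
    have h'L: "h' \<in> Lq q" unfolding h'_def by (intro Lq_diff less.prems Lq_pcompose sL P(1))
    have "degree h' < degree h"
    proof (cases "h' = 0")
      case True then show ?thesis using t q2 by (simp add: one_le_power)
    next
      case False
      have "degree h' \<le> q ^ t" unfolding h'_def using t dsP by (intro degree_diff_le) auto
      moreover have "coeff h' (q ^ t) = 0" unfolding h'_def using t dsP lsP by (simp add: c_def)
      ultimately show ?thesis using False t eq_zero_or_degree_less by auto
    qed
    from less.hyps[OF this h'L] obtain \<sigma> \<rho> where IH: "\<sigma> \<in> Lq q" "\<rho> \<in> Lq q" "degree \<rho> < q ^ n"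
      "h' = pcompose \<sigma> P + \<rho>" by blast
    have "h = pcompose (\<sigma> + s) P + \<rho>" using IH(4) by (simp add: h'_def pcompose_add algebra_simps)
    then show ?thesis using IH sL by (intro exI[of _ "\<sigma> + s"] exI[of _ \<rho>]) (auto intro: Lq_add)
  qed
qed

end



lemma mono_less_simps:
  "mono_less k (a, 1) (b, 1) \<longleftrightarrow> a < b"
  "mono_less k (a, 2) (b, 2) \<longleftrightarrow> a < b"
  "mono_less k (a, 2) (b, 1) \<longleftrightarrow> a + (k - 1) < b"
  "mono_less k (a, 1) (b, 2) \<longleftrightarrow> a \<le> b + (k - 1)"
  by (auto simp: mono_less_def wt_def)

definition mkey :: "nat \<Rightarrow> nat \<times> nat \<Rightarrow> nat" where
  "mkey k m = 2 * (fst m + wt k (snd m)) + (snd m - 1)"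

lemma mkey_less:
  assumes "snd m1 \<in> {1, 2}" "snd m2 \<in> {1, 2}"
  shows "mono_less k m1 m2 \<longleftrightarrow> mkey k m1 < mkey k m2"
  using assms by (cases m1, cases m2) (auto simp: mono_less_def mkey_def wt_def)

lemma mkey_inj:
  assumes "snd m1 \<in> {1, 2}" "snd m2 \<in> {1, 2}" "mkey k m1 = mkey k m2"
  shows "m1 = m2"
  using assms apply (cases m1, cases m2) apply (auto simp: mkey_def wt_def) apply presburger+ done

context fqs begin

lemma vsupp_finite:
  fixes v :: "'a lvec"
  shows "finite (vsupp q v)"
proof (rule finite_subset[of _ "{..degree (fst v) + degree (snd v)} \<times> {1, 2}"])
  show "vsupp q v \<subseteq> {..degree (fst v) + degree (snd v)} \<times> {1, 2}"
  proof
    fix x assume x: "x \<in> vsupp q v"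
    then obtain i j where ij: "x = (i, j)" "j \<in> {1, 2}" "qcoeff q (vcomp_j j v) i \<noteq> 0"
      by (auto simp: vsupp_def)
    then have "q ^ i \<le> degree (vcomp_j j v)" by (auto simp: qcoeff_def intro: le_degree)
    then have "i \<le> degree (fst v) + degree (snd v)" using i_less_qpow[of i] ij(2)
      by (auto simp: vcomp_j_def split: if_splits)
    then show "x \<in> {..degree (fst v) + degree (snd v)} \<times> {1, 2}" using ij by auto
  qed
qed simp

lemma vsupp_deg:
  fixes v :: "'a lvec"
  assumes "vcomp_j j v \<in> Lq q" "vcomp_j j v \<noteq> 0" "j \<in> {1, 2}"
  shows "\<exists>t. degree (vcomp_j j v) = q ^ t \<and> (t, j) \<in> vsupp q v"
proof -
  obtain t where t: "degree (vcomp_j j v) = q ^ t" using Lq_degree[OF assms(1,2)] by blast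
  then have "qcoeff q (vcomp_j j v) t \<noteq> 0" using assms(2) leading_coeff_neq_0[of "vcomp_j j v"]
    by (simp add: qcoeff_def)
  then show ?thesis using t assms(3) by (auto simp: vsupp_def)
qed

lemma vsupp_le:
  fixes v :: "'a lvec"
  assumes "(i, j) \<in> vsupp q v"
  shows "q ^ i \<le> degree (vcomp_j j v)"
  using assms by (auto simp: vsupp_def qcoeff_def intro: le_degree)

lemma lm_props:
  fixes v :: "'a lvec"
  assumes L: "fst v \<in> Lq q" "snd v \<in> Lq q" and v0: "v \<noteq> 0"
  shows "lm q k v \<in> vsupp q v \<and> (\<forall>m'\<in>vsupp q v. m' \<noteq> lm q k v \<longrightarrow> mono_less k m' (lm q k v))"
proof -
  let ?S = "vsupp q v"
  have fin: "finite ?S" by (rule vsupp_finite)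
  have ne: "?S \<noteq> {}"
  proof (cases "fst v = 0")
    case True
    then have "snd v \<noteq> 0" using v0 by (metis prod.collapse zero_prod_def)
    then show ?thesis using vsupp_deg[of 2 v] L by (auto simp: vcomp_j_def)
  next
    case False
    then show ?thesis using vsupp_deg[of 1 v] L by (auto simp: vcomp_j_def)
  qed
  have snd12: "snd x \<in> {1, 2}" if "x \<in> ?S" for x using that by (auto simp: vsupp_def)
  define M0 where "M0 = Max (mkey k ` ?S)"
  have "M0 \<in> mkey k ` ?S" unfolding M0_def using fin ne by (intro Max_in) auto
  then obtain m0 where m0: "m0 \<in> ?S" "mkey k m0 = M0" by auto
  have P: "m0 \<in> ?S \<and> (\<forall>m'\<in>?S. m' \<noteq> m0 \<longrightarrow> mono_less k m' m0)"
  proof (intro conjI ballI impI)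
    show "m0 \<in> ?S" by fact
    fix m' assume m': "m' \<in> ?S" "m' \<noteq> m0"
    have "mkey k m' \<le> M0" unfolding M0_def using fin m'(1) by (intro Max_ge) auto
    moreover have "mkey k m' \<noteq> mkey k m0" using mkey_inj[of m' m0 k] snd12 m' m0(1) by auto
    ultimately have "mkey k m' < mkey k m0" using m0(2) by simp
    then show "mono_less k m' m0" using mkey_less snd12 m'(1) m0(1) by blast
  qed
  have "lm q k v = m0" unfolding lm_def
  proof (rule the_equality)
    show "m0 \<in> ?S \<and> (\<forall>m'\<in>?S. m' \<noteq> m0 \<longrightarrow> mono_less k m' m0)" by (rule P)
    fix m assume m: "m \<in> ?S \<and> (\<forall>m'\<in>?S. m' \<noteq> m \<longrightarrow> mono_less k m' m)"
    show "m = m0"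
    proof (rule ccontr)
      assume "m \<noteq> m0"
      then have "mono_less k m0 m" "mono_less k m m0" using m P by auto
      then show False using mkey_less snd12 m P by (metis less_asym)
    qed
  qed
  then show ?thesis using P by simp
qed

end



locale mainloc = fqs2 q e ty m for q e and ty :: "'a::{field,finite} itself" and m +
  fixes n k :: nat and g r :: "nat \<Rightarrow> 'a" and b1 b2 :: "'a lvec"
  assumes li: "lin_indep_Fq q n g" and k1: "1 \<le> k" and kn: "k \<le> n"
    and mb: "minimal_basis q k (Mmod q n g r) {b1, b2}"
    and lp1: "lpos q k b1 = 1" and lp2: "lpos q k b2 = 2"
begin

abbreviation "PI \<equiv> Pi_g q n g"
abbreviation "LL \<equiv> - Lambda_g q n g r"
abbreviation "MM \<equiv> Mmod q n g r"

definition Phi :: "'a poly \<Rightarrow> 'a poly \<Rightarrow> 'a lvec" where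
  "Phi \<beta> \<gamma> = (pcompose \<beta> PI + pcompose \<gamma> LL, \<gamma>)"

lemma n1: "n \<ge> 1" using k1 kn by simp

lemma PI: "PI \<in> Lq q" "degree PI = q ^ n" "lead_coeff PI = 1"
  using Pi_g_props[OF li] by auto

lemma LL: "LL \<in> Lq q" using Lambda_Lq[OF n1] by (intro Lq_uminus)

lemma X_eq: "(monom 1 1 :: 'a poly) = [:0, 1:]" by (simp add: monom_altdef)

lemma pcompose_idL': "pcompose [:0, 1:] (p :: 'a poly) = p"
  by (simp add: pcompose_pCons)

lemma MM_eq: "MM = {Phi \<beta> \<gamma> | \<beta> \<gamma>. \<beta> \<in> Lq q \<and> \<gamma> \<in> Lq q}"
proof -
  have eq: "vcomp \<beta> (PI, 0) + vcomp \<gamma> (LL, monom 1 1) = Phi \<beta> \<gamma>" if "\<beta> \<in> Lq q" for \<beta> \<gamma>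
    using Lq_coeff0[OF that] unfolding vcomp_def X_eq by (simp add: Phi_def pcompose_0')
  show ?thesis unfolding Mmod_def
  proof (intro Collect_cong iffI)
    fix x assume "\<exists>\<beta> \<gamma>. x = vcomp \<beta> (PI, 0) + vcomp \<gamma> (LL, monom 1 1) \<and> \<beta> \<in> Lq q \<and> \<gamma> \<in> Lq q"
    then obtain \<beta> \<gamma> where "x = vcomp \<beta> (PI, 0) + vcomp \<gamma> (LL, monom 1 1)" "\<beta> \<in> Lq q" "\<gamma> \<in> Lq q" by blast
    then show "\<exists>\<beta> \<gamma>. x = Phi \<beta> \<gamma> \<and> \<beta> \<in> Lq q \<and> \<gamma> \<in> Lq q" using eq by blast
  next
    fix x assume "\<exists>\<beta> \<gamma>. x = Phi \<beta> \<gamma> \<and> \<beta> \<in> Lq q \<and> \<gamma> \<in> Lq q"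
    then obtain \<beta> \<gamma> where "x = Phi \<beta> \<gamma>" "\<beta> \<in> Lq q" "\<gamma> \<in> Lq q" by blast
    then show "\<exists>\<beta> \<gamma>. x = vcomp \<beta> (PI, 0) + vcomp \<gamma> (LL, monom 1 1) \<and> \<beta> \<in> Lq q \<and> \<gamma> \<in> Lq q"
      using eq by metis
  qed
qed

lemma MM_Lq: "v \<in> MM \<Longrightarrow> fst v \<in> Lq q \<and> snd v \<in> Lq q"
  unfolding MM_eq Phi_def using PI LL by (auto intro!: Lq_add Lq_pcompose)

lemma MM_vcomp: assumes "v \<in> MM" "a \<in> Lq q" shows "vcomp a v \<in> MM"
proof -
  obtain \<beta> \<gamma> where bg: "\<beta> \<in> Lq q" "\<gamma> \<in> Lq q" "v = Phi \<beta> \<gamma>" using assms(1) unfolding MM_eq by blast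
  have "vcomp a v = Phi (pcompose a \<beta>) (pcompose a \<gamma>)"
    using bg assms(2) by (simp add: vcomp_def Phi_def pcompose_additive pcompose_assoc)
  moreover have "pcompose a \<beta> \<in> Lq q" "pcompose a \<gamma> \<in> Lq q" using bg assms(2) by (auto intro: Lq_pcompose)
  ultimately show ?thesis unfolding MM_eq by blast
qed

lemma MM_add: assumes "v \<in> MM" "w \<in> MM" shows "v + w \<in> MM"
proof -
  obtain \<beta> \<gamma> where bg: "\<beta> \<in> Lq q" "\<gamma> \<in> Lq q" "v = Phi \<beta> \<gamma>" using assms(1) unfolding MM_eq by blast
  obtain \<beta>' \<gamma>' where bg': "\<beta>' \<in> Lq q" "\<gamma>' \<in> Lq q" "w = Phi \<beta>' \<gamma>'" using assms(2) unfolding MM_eq by blast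
  have "v + w = Phi (\<beta> + \<beta>') (\<gamma> + \<gamma>')" using bg bg' by (simp add: Phi_def pcompose_add algebra_simps)
  moreover have "\<beta> + \<beta>' \<in> Lq q" "\<gamma> + \<gamma>' \<in> Lq q" using bg bg' by (auto intro: Lq_add)
  ultimately show ?thesis unfolding MM_eq by blast
qed

lemma b12: "b1 \<noteq> b2" using lp1 lp2 by auto

lemma basis: "is_basis q MM {b1, b2}" using mb by (simp add: minimal_basis_def)

lemma bM: "b1 \<in> MM" "b2 \<in> MM" using basis by (auto simp: is_basis_def)

lemma gen: assumes "f \<in> MM" shows "\<exists>a c. a \<in> Lq q \<and> c \<in> Lq q \<and> f = vcomp a b1 + vcomp c b2"
proof -
  obtain A where A: "\<forall>b\<in>{b1, b2}. A b \<in> Lq q" "f = (\<Sum>b\<in>{b1, b2}. vcomp (A b) b)"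
    using basis assms unfolding is_basis_def by blast
  then show ?thesis using b12 by (intro exI[of _ "A b1"] exI[of _ "A b2"]) auto
qed

lemma indep: assumes "a \<in> Lq q" "c \<in> Lq q" "vcomp a b1 + vcomp c b2 = 0" shows "a = 0 \<and> c = 0"
proof -
  define A where "A b = (if b = b1 then a else c)" for b
  have "(\<Sum>b\<in>{b1, b2}. vcomp (A b) b) = 0" using assms(3) b12 by (simp add: A_def)
  moreover have "\<forall>b\<in>{b1, b2}. A b \<in> Lq q" using assms by (auto simp: A_def)
  ultimately have "\<forall>b\<in>{b1, b2}. A b = 0" using basis unfolding is_basis_def by blast
  then show ?thesis using b12 by (auto simp: A_def)
qed

lemma vcomp_diff: "vcomp (a - a') v = vcomp a v - vcomp a' v"
  by (simp add: vcomp_def pcompose_diff)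

lemma Psi_inj:
  assumes "a \<in> Lq q" "c \<in> Lq q" "a' \<in> Lq q" "c' \<in> Lq q"
    and "vcomp a b1 + vcomp c b2 = vcomp a' b1 + vcomp c' b2"
  shows "a = a' \<and> c = c'"
proof -
  have "vcomp (a - a') b1 + vcomp (c - c') b2 = 0" using assms(5) by (simp add: vcomp_diff algebra_simps)
  then show ?thesis using indep[of "a - a'" "c - c'"] assms by (auto intro: Lq_diff)
qed

lemma b_nonzero: "b1 \<noteq> 0" "b2 \<noteq> 0"
proof -
  have X0: "(monom 1 1 :: 'a poly) \<noteq> 0" by simp
  have v1: "vcomp (monom 1 1) b = b" for b :: "'a lvec" unfolding vcomp_def X_eq pcompose_idL' by simp
  have v0: "vcomp 0 b = 0" for b :: "'a lvec" by (simp add: vcomp_def zero_prod_def)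
  show "b1 \<noteq> 0"
  proof
    assume "b1 = 0"
    then have "vcomp (monom 1 1) b1 + vcomp 0 b2 = 0" using v1 v0 by simp
    then show False using indep[OF Lq_X Lq_0] X0 by blast
  qed
  show "b2 \<noteq> 0"
  proof
    assume "b2 = 0"
    then have "vcomp 0 b1 + vcomp (monom 1 1) b2 = 0" using v1 v0 by simp
    then show False using indep[OF Lq_0 Lq_X] X0 by blast
  qed
qed

lemma bL: "fst b1 \<in> Lq q" "snd b1 \<in> Lq q" "fst b2 \<in> Lq q" "snd b2 \<in> Lq q"
  using MM_Lq[OF bM(1)] MM_Lq[OF bM(2)] by auto

end



context mainloc begin

lemma b1_facts:
  "fst b1 \<noteq> 0" "degree (fst b1) = q ^ qdeg q (fst b1)"
  "degree (snd b1) * q ^ (k - 1) < degree (fst b1)"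
  "snd b1 \<noteq> 0 \<Longrightarrow> qdeg q (snd b1) + (k - 1) < qdeg q (fst b1)"
proof -
  obtain i j where ij: "lm q k b1 = (i, j)" by (cases "lm q k b1")
  have j: "j = 1" using lp1 ij by (simp add: lpos_def)
  have P: "(i, 1) \<in> vsupp q b1" "\<forall>m'\<in>vsupp q b1. m' \<noteq> (i, 1) \<longrightarrow> mono_less k m' (i, 1)"
    using lm_props[OF bL(1,2) b_nonzero(1), of k] ij j by auto
  have "qcoeff q (fst b1) i \<noteq> 0" using P(1) by (simp add: vsupp_def vcomp_j_def)
  then show f0: "fst b1 \<noteq> 0" by (auto simp: qcoeff_def)
  obtain t where t: "degree (fst b1) = q ^ t" "(t, 1) \<in> vsupp q b1"
    using vsupp_deg[of 1 b1] bL f0 by (auto simp: vcomp_j_def)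
  have "t \<le> i"
  proof (rule ccontr)
    assume "\<not> t \<le> i"
    then have "mono_less k (t, 1) (i, 1)" using P(2) t(2) by auto
    then show False using \<open>\<not> t \<le> i\<close> by (auto simp: mono_less_def wt_def)
  qed
  moreover have "q ^ i \<le> q ^ t" using vsupp_le[OF P(1)] t(1) by (simp add: vcomp_j_def)
  ultimately have ti: "t = i" using qpow_le by (simp add: le_antisym)
  have qd: "qdeg q (fst b1) = i" using qdeg_eq[OF bL(1) f0] t(1) ti by simp
  then show "degree (fst b1) = q ^ qdeg q (fst b1)" using t(1) ti by simp
  have snd_case: "qdeg q (snd b1) + (k - 1) < qdeg q (fst b1) \<and> degree (snd b1) * q ^ (k - 1) < degree (fst b1)"
    if s0: "snd b1 \<noteq> 0"
  proof -
    obtain s where s: "degree (snd b1) = q ^ s" "(s, 2) \<in> vsupp q b1"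
      using vsupp_deg[of 2 b1] bL s0 by (auto simp: vcomp_j_def)
    have "mono_less k (s, 2) (i, 1)" using P(2) s(2) by auto
    then have lt: "s + (k - 1) < i" by (auto simp: mono_less_def wt_def)
    have "qdeg q (snd b1) = s" using qdeg_eq[OF bL(2) s0 s(1)] .
    moreover have "degree (snd b1) * q ^ (k - 1) = q ^ (s + (k - 1))" using s(1) by (simp add: power_add)
    ultimately show ?thesis using lt qd t(1) ti qpow_less by simp
  qed
  show "degree (snd b1) * q ^ (k - 1) < degree (fst b1)"
  proof (cases "snd b1 = 0")
    case True then show ?thesis using t(1) q2 by simp
  next
    case False then show ?thesis using snd_case by blast
  qed
  show "snd b1 \<noteq> 0 \<Longrightarrow> qdeg q (snd b1) + (k - 1) < qdeg q (fst b1)" using snd_case by blast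
qed

lemma b2_facts:
  "snd b2 \<noteq> 0" "degree (snd b2) = q ^ qdeg q (snd b2)"
  "degree (fst b2) \<le> degree (snd b2) * q ^ (k - 1)"
  "fst b2 \<noteq> 0 \<Longrightarrow> qdeg q (fst b2) \<le> qdeg q (snd b2) + (k - 1)"
proof -
  obtain i j where ij: "lm q k b2 = (i, j)" by (cases "lm q k b2")
  have j: "j = 2" using lp2 ij by (simp add: lpos_def)
  have P: "(i, 2) \<in> vsupp q b2" "\<forall>m'\<in>vsupp q b2. m' \<noteq> (i, 2) \<longrightarrow> mono_less k m' (i, 2)"
    using lm_props[OF bL(3,4) b_nonzero(2), of k] ij j by auto
  have "qcoeff q (snd b2) i \<noteq> 0" using P(1) by (simp add: vsupp_def vcomp_j_def)
  then show f0: "snd b2 \<noteq> 0" by (auto simp: qcoeff_def)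
  obtain t where t: "degree (snd b2) = q ^ t" "(t, 2) \<in> vsupp q b2"
    using vsupp_deg[of 2 b2] bL f0 by (auto simp: vcomp_j_def)
  have "t \<le> i"
  proof (rule ccontr)
    assume "\<not> t \<le> i"
    then have "mono_less k (t, 2) (i, 2)" using P(2) t(2) by auto
    then show False using \<open>\<not> t \<le> i\<close> by (auto simp: mono_less_def wt_def)
  qed
  moreover have "q ^ i \<le> q ^ t" using vsupp_le[OF P(1)] t(1) by (simp add: vcomp_j_def)
  ultimately have ti: "t = i" using qpow_le by (simp add: le_antisym)
  have qd: "qdeg q (snd b2) = i" using qdeg_eq[OF bL(4) f0] t(1) ti by simp
  then show "degree (snd b2) = q ^ qdeg q (snd b2)" using t(1) ti by simp
  have fst_case: "qdeg q (fst b2) \<le> qdeg q (snd b2) + (k - 1) \<and> degree (fst b2) \<le> degree (snd b2) * q ^ (k - 1)"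
    if s0: "fst b2 \<noteq> 0"
  proof -
    obtain s where s: "degree (fst b2) = q ^ s" "(s, 1) \<in> vsupp q b2"
      using vsupp_deg[of 1 b2] bL s0 by (auto simp: vcomp_j_def)
    have "mono_less k (s, 1) (i, 2)" using P(2) s(2) by auto
    then have le: "s \<le> i + (k - 1)" by (auto simp: mono_less_def wt_def)
    have "qdeg q (fst b2) = s" using qdeg_eq[OF bL(3) s0 s(1)] .
    moreover have "degree (snd b2) * q ^ (k - 1) = q ^ (i + (k - 1))" using t(1) ti by (simp add: power_add)
    ultimately show ?thesis using le qd s(1) qpow_le by simp
  qed
  show "degree (fst b2) \<le> degree (snd b2) * q ^ (k - 1)"
  proof (cases "fst b2 = 0")
    case True then show ?thesis by simp
  next
    case False then show ?thesis using fst_case by blast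
  qed
  show "fst b2 \<noteq> 0 \<Longrightarrow> qdeg q (fst b2) \<le> qdeg q (snd b2) + (k - 1)" using fst_case by blast
qed

end



context mainloc begin

definition Box :: "nat \<Rightarrow> 'a lvec set" where
  "Box N = {v. fst v \<in> Lq q \<and> snd v \<in> Lq q \<and> degree (fst v) < q ^ N \<and> degree (snd v) * q ^ (k - 1) < q ^ N}"

lemma mult_pow_less: "d \<le> N \<Longrightarrow> x * q ^ d < q ^ N \<longleftrightarrow> x < q ^ (N - d)"
proof -
  assume "d \<le> N"
  then have "q ^ N = q ^ (N - d) * q ^ d" by (simp add: power_add[symmetric])
  moreover have "q ^ d > 0" using q2 by simp
  ultimately show ?thesis by simp
qed

abbreviation "d1 \<equiv> qdeg q (fst b1)"
abbreviation "d2 \<equiv> qdeg q (snd b2)"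

lemma Psi_box:
  assumes a: "a \<in> Lq q" and c: "c \<in> Lq q" and N: "d1 \<le> N" "d2 + (k - 1) \<le> N"
  shows "vcomp a b1 + vcomp c b2 \<in> Box N \<longleftrightarrow> a \<in> Pt (N - d1) \<and> c \<in> Pt (N - (d2 + (k - 1)))"
proof -
  have K: "q ^ (k - 1) \<ge> 1" using q2 by (simp add: one_le_power)
  have comps: "vcomp a b1 + vcomp c b2 = (pcompose a (fst b1) + pcompose c (fst b2), pcompose a (snd b1) + pcompose c (snd b2))"
    by (simp add: vcomp_def)
  have L: "pcompose a (fst b1) + pcompose c (fst b2) \<in> Lq q" "pcompose a (snd b1) + pcompose c (snd b2) \<in> Lq q"
    using a c bL by (auto intro!: Lq_add Lq_pcompose)
  have "vcomp a b1 + vcomp c b2 \<in> Box N \<longleftrightarrow>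
      (degree (pcompose a (fst b1) + pcompose c (fst b2)) < q ^ N \<and>
       degree (pcompose a (snd b1) + pcompose c (snd b2)) * q ^ (k - 1) < q ^ N)"
    using L unfolding comps Box_def by simp
  also have "\<dots> \<longleftrightarrow> degree a * degree (fst b1) < q ^ N \<and> degree c * (degree (snd b2) * q ^ (k - 1)) < q ^ N"
    by (rule pred_deg[OF a c bL(4) b1_facts(1) b2_facts(1) b1_facts(3) b2_facts(3) K])
  also have "\<dots> \<longleftrightarrow> degree a * q ^ d1 < q ^ N \<and> degree c * q ^ (d2 + (k - 1)) < q ^ N"
    using b1_facts(2) b2_facts(2) by (simp add: power_add)
  also have "\<dots> \<longleftrightarrow> degree a < q ^ (N - d1) \<and> degree c < q ^ (N - (d2 + (k - 1)))"
    using mult_pow_less N by simp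
  finally show ?thesis using a c by (simp add: Pt_def)
qed

lemma side1:
  assumes N: "d1 + d2 + k \<le> N"
  shows "card (MM \<inter> Box N) = card (UNIV :: 'a set) ^ (N - d1) * card (UNIV :: 'a set) ^ (N - (d2 + (k - 1)))"
proof -
  have N1: "d1 \<le> N" "d2 + (k - 1) \<le> N" using N by auto
  let ?Psi = "\<lambda>(a, c). vcomp a b1 + vcomp c b2"
  let ?D = "Pt (N - d1) \<times> Pt (N - (d2 + (k - 1)))"
  have PtL: "x \<in> Pt t \<Longrightarrow> x \<in> Lq q" for x t by (simp add: Pt_def)
  have eq: "MM \<inter> Box N = ?Psi ` ?D"
  proof
    show "MM \<inter> Box N \<subseteq> ?Psi ` ?D"
    proof
      fix v assume v: "v \<in> MM \<inter> Box N"
      then obtain a c where ac: "a \<in> Lq q" "c \<in> Lq q" "v = vcomp a b1 + vcomp c b2" using gen by blast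
      then have "a \<in> Pt (N - d1) \<and> c \<in> Pt (N - (d2 + (k - 1)))" using Psi_box[OF ac(1,2) N1] v by simp
      then show "v \<in> ?Psi ` ?D" using ac(3) by force
    qed
    show "?Psi ` ?D \<subseteq> MM \<inter> Box N"
    proof
      fix v assume "v \<in> ?Psi ` ?D"
      then obtain a c where ac: "a \<in> Pt (N - d1)" "c \<in> Pt (N - (d2 + (k - 1)))" "v = vcomp a b1 + vcomp c b2"
        by auto
      have "v \<in> MM" using ac bM PtL by (auto intro!: MM_add MM_vcomp)
      moreover have "v \<in> Box N" using Psi_box[OF PtL[OF ac(1)] PtL[OF ac(2)] N1] ac by simp
      ultimately show "v \<in> MM \<inter> Box N" by simp
    qed
  qed
  have inj: "inj_on ?Psi ?D"
  proof (rule inj_onI)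
    fix x y assume xy: "x \<in> ?D" "y \<in> ?D" "?Psi x = ?Psi y"
    obtain a c where x: "x = (a, c)" by (cases x)
    obtain a' c' where y: "y = (a', c')" by (cases y)
    have "a \<in> Lq q" "c \<in> Lq q" "a' \<in> Lq q" "c' \<in> Lq q" using xy x y PtL by auto
    from Psi_inj[OF this] show "x = y" using xy(3) x y by simp
  qed
  have "card (MM \<inter> Box N) = card ?D" unfolding eq using inj by (rule card_image)
  also have "\<dots> = card (Pt (N - d1)) * card (Pt (N - (d2 + (k - 1))))" by (rule card_cartesian_product)
  finally show ?thesis by (simp add: card_Pt)
qed

end



context mainloc begin

lemma Phi_inj:
  assumes "\<beta> \<in> Lq q" "\<beta>' \<in> Lq q" "Phi \<beta> \<gamma> = Phi \<beta>' \<gamma>'"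
  shows "\<beta> = \<beta>' \<and> \<gamma> = \<gamma>'"
proof -
  have g: "\<gamma> = \<gamma>'" using assms(3) by (simp add: Phi_def)
  then have "pcompose \<beta> PI = pcompose \<beta>' PI" using assms(3) by (simp add: Phi_def)
  then have z: "pcompose (\<beta> - \<beta>') PI = 0" by (simp add: pcompose_diff)
  have "\<beta> - \<beta>' = 0"
  proof (rule ccontr)
    assume nz: "\<beta> - \<beta>' \<noteq> 0"
    have "degree (\<beta> - \<beta>') \<ge> 1" using Lq_degree_pos[OF Lq_diff[OF assms(1,2)] nz] .
    moreover have "degree PI \<ge> 1" using PI(2) q2 by (simp add: one_le_power)
    ultimately have "degree (pcompose (\<beta> - \<beta>') PI) \<ge> 1" by (simp add: degree_pcompose)
    then show False using z by simp
  qed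
  then show ?thesis using g by simp
qed

lemma box_div:
  assumes d: "\<delta> \<in> Lq q" and r: "degree \<rho> < q ^ n" and N: "n \<le> N"
  shows "degree (pcompose \<delta> PI + \<rho>) < q ^ N \<longleftrightarrow> degree \<delta> < q ^ (N - n)"
proof (cases "\<delta> = 0")
  case True
  have "q ^ n \<le> q ^ N" using N qpow_le by simp
  then have "degree \<rho> < q ^ N" using r by linarith
  then show ?thesis using True q2 by simp
next
  case False
  have dd: "degree (pcompose \<delta> PI) = degree \<delta> * q ^ n" by (simp add: degree_pcompose PI(2))
  have "degree \<delta> \<ge> 1" using Lq_degree_pos[OF d False] .
  then have "q ^ n \<le> degree \<delta> * q ^ n" by simp
  then have "degree \<rho> < degree (pcompose \<delta> PI)" using r dd by linarith
  then have "degree (pcompose \<delta> PI + \<rho>) = degree \<delta> * q ^ n" using dd by (simp add: degree_add_eq_left)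
  then show ?thesis using mult_pow_less[OF N] by simp
qed

definition Fib :: "nat \<Rightarrow> 'a poly \<Rightarrow> 'a poly set" where
  "Fib N \<gamma> = {\<beta>. \<beta> \<in> Lq q \<and> degree (pcompose \<beta> PI + pcompose \<gamma> LL) < q ^ N}"

lemma fib:
  assumes g: "\<gamma> \<in> Lq q" and N: "n \<le> N"
  shows "finite (Fib N \<gamma>) \<and> card (Fib N \<gamma>) = card (UNIV :: 'a set) ^ (N - n)"
proof -
  have hL: "pcompose \<gamma> LL \<in> Lq q" using g LL by (rule Lq_pcompose)
  obtain \<sigma> \<rho> where sr: "\<sigma> \<in> Lq q" "\<rho> \<in> Lq q" "degree \<rho> < q ^ n" "pcompose \<gamma> LL = pcompose \<sigma> PI + \<rho>"
    using division[OF PI hL] by blast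
  have key: "pcompose \<beta> PI + pcompose \<gamma> LL = pcompose (\<beta> + \<sigma>) PI + \<rho>" for \<beta>
    using sr(4) by (simp add: pcompose_add algebra_simps)
  have eq: "Fib N \<gamma> = (\<lambda>\<delta>. \<delta> - \<sigma>) ` Pt (N - n)"
  proof
    show "Fib N \<gamma> \<subseteq> (\<lambda>\<delta>. \<delta> - \<sigma>) ` Pt (N - n)"
    proof
      fix \<beta> assume b: "\<beta> \<in> Fib N \<gamma>"
      then have bL: "\<beta> \<in> Lq q" by (simp add: Fib_def)
      have dL: "\<beta> + \<sigma> \<in> Lq q" using bL sr(1) by (rule Lq_add)
      have "degree (pcompose (\<beta> + \<sigma>) PI + \<rho>) < q ^ N" using b key by (simp add: Fib_def)
      then have "\<beta> + \<sigma> \<in> Pt (N - n)" using box_div[OF dL sr(3) N] dL by (simp add: Pt_def)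
      moreover have "\<beta> = (\<beta> + \<sigma>) - \<sigma>" by simp
      ultimately show "\<beta> \<in> (\<lambda>\<delta>. \<delta> - \<sigma>) ` Pt (N - n)" by blast
    qed
    show "(\<lambda>\<delta>. \<delta> - \<sigma>) ` Pt (N - n) \<subseteq> Fib N \<gamma>"
    proof
      fix \<beta> assume "\<beta> \<in> (\<lambda>\<delta>. \<delta> - \<sigma>) ` Pt (N - n)"
      then obtain \<delta> where de: "\<delta> \<in> Pt (N - n)" "\<beta> = \<delta> - \<sigma>" by auto
      have dL: "\<delta> \<in> Lq q" using de(1) by (simp add: Pt_def)
      have "\<beta> \<in> Lq q" using de(2) dL sr(1) by (simp add: Lq_diff)
      moreover have "degree (pcompose \<delta> PI + \<rho>) < q ^ N" using box_div[OF dL sr(3) N] de(1) by (simp add: Pt_def)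
      ultimately show "\<beta> \<in> Fib N \<gamma>" using key[of \<beta>] de(2) by (simp add: Fib_def)
    qed
  qed
  have inj: "inj_on (\<lambda>\<delta>. \<delta> - \<sigma>) (Pt (N - n))" by (rule inj_onI) simp
  show ?thesis unfolding eq using card_image[OF inj] finite_Pt card_Pt by simp
qed

lemma side2:
  assumes N: "n + k \<le> N"
  shows "card (MM \<inter> Box N) = card (UNIV :: 'a set) ^ (N - (k - 1)) * card (UNIV :: 'a set) ^ (N - n)"
proof -
  have Nn: "n \<le> N" using N by simp
  have Nk: "k - 1 \<le> N" using N by simp
  let ?Phi = "\<lambda>(\<gamma>, \<beta>). Phi \<beta> \<gamma>"
  let ?D = "SIGMA \<gamma>:Pt (N - (k - 1)). Fib N \<gamma>"
  have PtL: "x \<in> Pt t \<Longrightarrow> x \<in> Lq q" for x t by (simp add: Pt_def)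
  have box: "Phi \<beta> \<gamma> \<in> Box N \<longleftrightarrow> \<gamma> \<in> Pt (N - (k - 1)) \<and> \<beta> \<in> Fib N \<gamma>"
    if "\<beta> \<in> Lq q" "\<gamma> \<in> Lq q" for \<beta> \<gamma>
  proof -
    have "pcompose \<beta> PI + pcompose \<gamma> LL \<in> Lq q" using that PI LL by (intro Lq_add Lq_pcompose)
    then show ?thesis using that mult_pow_less[OF Nk, of "degree \<gamma>"]
      by (auto simp: Phi_def Box_def Pt_def Fib_def)
  qed
  have eq: "MM \<inter> Box N = ?Phi ` ?D"
  proof
    show "MM \<inter> Box N \<subseteq> ?Phi ` ?D"
    proof
      fix v assume v: "v \<in> MM \<inter> Box N"
      then obtain \<beta> \<gamma> where bg: "\<beta> \<in> Lq q" "\<gamma> \<in> Lq q" "v = Phi \<beta> \<gamma>" unfolding MM_eq by blast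
      then have "\<gamma> \<in> Pt (N - (k - 1)) \<and> \<beta> \<in> Fib N \<gamma>" using box v by simp
      then show "v \<in> ?Phi ` ?D" using bg(3) by force
    qed
    show "?Phi ` ?D \<subseteq> MM \<inter> Box N"
    proof
      fix v assume "v \<in> ?Phi ` ?D"
      then obtain \<gamma> \<beta> where bg: "\<gamma> \<in> Pt (N - (k - 1))" "\<beta> \<in> Fib N \<gamma>" "v = Phi \<beta> \<gamma>" by auto
      have L: "\<beta> \<in> Lq q" "\<gamma> \<in> Lq q" using bg PtL by (auto simp: Fib_def)
      have "v \<in> MM" unfolding MM_eq using L bg(3) by blast
      moreover have "v \<in> Box N" using box[OF L] bg by simp
      ultimately show "v \<in> MM \<inter> Box N" by simp
    qed
  qed
  have inj: "inj_on ?Phi ?D"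
  proof (rule inj_onI)
    fix x y assume xy: "x \<in> ?D" "y \<in> ?D" "?Phi x = ?Phi y"
    obtain c a where x: "x = (c, a)" by (cases x)
    obtain c' a' where y: "y = (c', a')" by (cases y)
    have "a \<in> Lq q" "a' \<in> Lq q" using xy x y by (auto simp: Fib_def)
    from Phi_inj[OF this] show "x = y" using xy(3) x y by simp
  qed
  have fin: "\<forall>\<gamma>\<in>Pt (N - (k - 1)). finite (Fib N \<gamma>)" using fib[OF _ Nn] PtL by blast
  have "card (MM \<inter> Box N) = card ?D" unfolding eq using inj by (rule card_image)
  also have "\<dots> = (\<Sum>\<gamma>\<in>Pt (N - (k - 1)). card (Fib N \<gamma>))" using finite_Pt fin by (rule card_SigmaI)
  also have "\<dots> = (\<Sum>\<gamma>\<in>Pt (N - (k - 1)). card (UNIV :: 'a set) ^ (N - n))"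
    using fib[OF _ Nn] PtL by (intro sum.cong) auto
  also have "\<dots> = card (Pt (N - (k - 1))) * card (UNIV :: 'a set) ^ (N - n)" by simp
  finally show ?thesis by (simp add: card_Pt)
qed

lemma main_eq: "d1 + d2 = n"
proof -
  define N where "N = n + k + d1 + d2"
  have "card (UNIV :: 'a set) ^ (N - d1) * card (UNIV :: 'a set) ^ (N - (d2 + (k - 1))) =
        card (UNIV :: 'a set) ^ (N - (k - 1)) * card (UNIV :: 'a set) ^ (N - n)"
    using side1[of N] side2[of N] by (simp add: N_def)
  then have "card (UNIV :: 'a set) ^ ((N - d1) + (N - (d2 + (k - 1)))) =
        card (UNIV :: 'a set) ^ ((N - (k - 1)) + (N - n))" by (simp add: power_add)
  moreover have "card (UNIV :: 'a set) > 1"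
  proof -
    have "q ^ 1 \<le> q ^ m" using m1 qpow_le by blast
    then show ?thesis using card q2 by simp
  qed
  ultimately have "(N - d1) + (N - (d2 + (k - 1))) = (N - (k - 1)) + (N - n)"
    using power_inject_exp by blast
  then show ?thesis using k1 by (simp add: N_def)
qed

end



theorem lemma31:
  fixes q m n k :: nat and g r :: "nat \<Rightarrow> 'a::{field,finite}" and b1 b2 :: "'a lvec"
  assumes "is_prime_power q" and "m \<ge> 1" and "card (UNIV :: 'a set) = q ^ m"
    and "1 \<le> k" and "k \<le> n"
    and "lin_indep_Fq q n g"
    and "minimal_basis q k (Mmod q n g r) {b1, b2}"
    and "lpos q k b1 = 1" and "lpos q k b2 = 2"
  shows "wqdeg q k b1 + wqdeg q k b2 = n + k - 1 \<and> qdeg q (fst b1) + qdeg q (snd b2) = n"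
proof -
  obtain p e where pe: "prime p" "e \<ge> 1" "q = p ^ e"
    using assms(1) unfolding is_prime_power_def by blast
  have cpos: "CHAR('a) > 0" by (rule finite_imp_CHAR_pos) simp
  have cpr: "prime CHAR('a)" using prime_CHAR_semidom[OF cpos] .
  have "CHAR('a) dvd card (UNIV :: 'a set)" by (rule CHAR_dvd_CARD)
  then have "CHAR('a) dvd p ^ (e * m)" using assms(3) pe(3) by (simp add: power_mult)
  then have "CHAR('a) dvd p" using cpr prime_dvd_power by blast
  then have cp: "CHAR('a) = p" using cpr pe(1) by (simp add: primes_dvd_imp_eq)
  interpret mainloc q e "TYPE('a)" m n k g r b1 b2
  proof unfold_locales
    show "prime CHAR('a)" by (rule cpr)
    show "q = CHAR('a) ^ e" using pe cp by simp
  qed (use pe assms in auto)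
  have w1: "wqdeg q k b1 = d1"
  proof (cases "snd b1 = 0")
    case True then show ?thesis using b1_facts(1) by (simp add: wqdeg_def)
  next
    case False then show ?thesis using b1_facts(1) b1_facts(4)[OF False] by (simp add: wqdeg_def)
  qed
  have w2: "wqdeg q k b2 = d2 + (k - 1)"
  proof (cases "fst b2 = 0")
    case True then show ?thesis using b2_facts(1) by (simp add: wqdeg_def)
  next
    case False then show ?thesis using b2_facts(1) b2_facts(4)[OF False] by (simp add: wqdeg_def)
  qed
  show ?thesis using w1 w2 main_eq assms(4) by simp
qed


end
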